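(* Let $H$ be a group, $K\lneq H$, $\phi\in\operatorname{Aut}(H)$, $G=\langle H,t;\ tkt^{-1}=\phi(k),\ k\in K\rangle$. The map $\chi_2:\operatorname{Out}_H^{(V)}(G)\to N_H(K)/Z(H)K$ sending the outer class of $\alpha_{(\gamma_b,a)}$ to $bZ(H)K$ is a well-defined surjective homomorphism with kernel $C_K$.
   Context: $\gamma_b$ denotes $h\mapsto b^{-1}hb$. For $\delta\in\operatorname{Aut}(H)$ and $a\in H$ with $\delta(K)=K$ and $\phi(\delta(k))=a^{-1}\delta(\phi(k))a$ for all $k\in K$, $\alpha_{(\delta,a)}$ denotes the automorphism of $G$ given by $h\mapsto\delta(h)$ ($h\in H$), $t\mapsto at$. $\operatorname{Out}_H^{(V)}(G)$ is the subgroup of $\operatorname{Out}(G)$ consisting of the outer classes of the automorphisms $\alpha_{(\gamma_b,a)}$, where $b\in N_H(K)$, $a\in H$ and $ba\phi(b)^{-1}\in C_H(\phi(K))$. $C_K$ is the subgroup of outer classes of $\alpha_{(1,a)}$ with $a\in C_H(\phi(K))$. Automorphisms are composed left to right. *)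

theory Defs
  imports "HOL-Algebra.Algebra"
begin

text \<open>Letters: Inl h (h in H), Inr True = t, Inr False = t^-1.\<close>

definition hnn_words :: "('a, 'm) monoid_scheme \<Rightarrow> ('a + bool) list set" where
  "hnn_words H = {w. \<forall>x \<in> set w. (case x of Inl h \<Rightarrow> h \<in> carrier H | Inr _ \<Rightarrow> True)}"

inductive hnn_eq :: "('a, 'm) monoid_scheme \<Rightarrow> 'a set \<Rightarrow> ('a \<Rightarrow> 'a)
    \<Rightarrow> ('a + bool) list \<Rightarrow> ('a + bool) list \<Rightarrow> bool"
  for H :: "('a, 'm) monoid_scheme" and K :: "'a set" and \<phi> :: "'a \<Rightarrow> 'a" where
  refl: "hnn_eq H K \<phi> w w"
| sym: "hnn_eq H K \<phi> w v \<Longrightarrow> hnn_eq H K \<phi> v w"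
| trans: "hnn_eq H K \<phi> u v \<Longrightarrow> hnn_eq H K \<phi> v w \<Longrightarrow> hnn_eq H K \<phi> u w"
| cong: "hnn_eq H K \<phi> w v \<Longrightarrow> hnn_eq H K \<phi> (u @ w @ z) (u @ v @ z)"
| h_mult: "h \<in> carrier H \<Longrightarrow> h' \<in> carrier H \<Longrightarrow>
           hnn_eq H K \<phi> [Inl h, Inl h'] [Inl (h \<otimes>\<^bsub>H\<^esub> h')]"
| h_one: "hnn_eq H K \<phi> [Inl \<one>\<^bsub>H\<^esub>] []"
| t_tinv: "hnn_eq H K \<phi> [Inr True, Inr False] []"
| tinv_t: "hnn_eq H K \<phi> [Inr False, Inr True] []"
| rel: "k \<in> K \<Longrightarrow> hnn_eq H K \<phi> [Inr True, Inl k, Inr False] [Inl (\<phi> k)]"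

definition hnn_class :: "('a, 'm) monoid_scheme \<Rightarrow> 'a set \<Rightarrow> ('a \<Rightarrow> 'a)
    \<Rightarrow> ('a + bool) list \<Rightarrow> ('a + bool) list set" where
  "hnn_class H K \<phi> w = {v \<in> hnn_words H. hnn_eq H K \<phi> w v}"

definition hnn_mult :: "('a, 'm) monoid_scheme \<Rightarrow> 'a set \<Rightarrow> ('a \<Rightarrow> 'a)
    \<Rightarrow> ('a + bool) list set \<Rightarrow> ('a + bool) list set \<Rightarrow> ('a + bool) list set" where
  "hnn_mult H K \<phi> A B = hnn_class H K \<phi> ((SOME x. x \<in> A) @ (SOME y. y \<in> B))"

definition HNN :: "('a, 'm) monoid_scheme \<Rightarrow> 'a set \<Rightarrow> ('a \<Rightarrow> 'a)
    \<Rightarrow> ('a + bool) list set monoid" where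
  "HNN H K \<phi> =
    \<lparr>carrier = hnn_class H K \<phi> ` hnn_words H,
     monoid.mult = hnn_mult H K \<phi>,
     one = hnn_class H K \<phi> []\<rparr>"

definition hnn_inc :: "('a, 'm) monoid_scheme \<Rightarrow> 'a set \<Rightarrow> ('a \<Rightarrow> 'a) \<Rightarrow> 'a
    \<Rightarrow> ('a + bool) list set" where
  "hnn_inc H K \<phi> h = hnn_class H K \<phi> [Inl h]"

definition hnn_t :: "('a, 'm) monoid_scheme \<Rightarrow> 'a set \<Rightarrow> ('a \<Rightarrow> 'a) \<Rightarrow> ('a + bool) list set" where
  "hnn_t H K \<phi> = hnn_class H K \<phi> [Inr True]"

text \<open>Aut(G) with left-to-right composition: (f * g)(x) = g (f x).\<close>
definition AutL :: "('a, 'c) monoid_scheme \<Rightarrow> ('a \<Rightarrow> 'a) monoid" where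
  "AutL G = (AutoGroup G)\<lparr>monoid.mult := (\<lambda>f g. g \<otimes>\<^bsub>AutoGroup G\<^esub> f)\<rparr>"

definition Inn :: "('a, 'c) monoid_scheme \<Rightarrow> ('a \<Rightarrow> 'a) set" where
  "Inn G = {(\<lambda>x \<in> carrier G. inv\<^bsub>G\<^esub> g \<otimes>\<^bsub>G\<^esub> x \<otimes>\<^bsub>G\<^esub> g) | g. g \<in> carrier G}"

definition OutL :: "('a, 'c) monoid_scheme \<Rightarrow> ('a \<Rightarrow> 'a) set monoid" where
  "OutL G = AutL G Mod Inn G"

definition outer_class :: "('a, 'c) monoid_scheme \<Rightarrow> ('a \<Rightarrow> 'a) \<Rightarrow> ('a \<Rightarrow> 'a) set" where
  "outer_class G f = Inn G #>\<^bsub>AutL G\<^esub> f"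

definition centralizer :: "('a, 'm) monoid_scheme \<Rightarrow> 'a set \<Rightarrow> 'a set" where
  "centralizer H S = {g \<in> carrier H. \<forall>s \<in> S. g \<otimes>\<^bsub>H\<^esub> s = s \<otimes>\<^bsub>H\<^esub> g}"

definition center :: "('a, 'm) monoid_scheme \<Rightarrow> 'a set" where
  "center H = centralizer H (carrier H)"

definition hnn_alpha :: "('a, 'm) monoid_scheme \<Rightarrow> 'a set \<Rightarrow> ('a \<Rightarrow> 'a)
    \<Rightarrow> ('a \<Rightarrow> 'a) \<Rightarrow> 'a \<Rightarrow> (('a + bool) list set \<Rightarrow> ('a + bool) list set)" where
  "hnn_alpha H K \<phi> \<delta> a =
    (THE f. f \<in> auto (HNN H K \<phi>)
       \<and> (\<forall>h \<in> carrier H. f (hnn_inc H K \<phi> h) = hnn_inc H K \<phi> (\<delta> h))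
       \<and> f (hnn_t H K \<phi>) = hnn_inc H K \<phi> a \<otimes>\<^bsub>HNN H K \<phi>\<^esub> hnn_t H K \<phi>)"

definition conjH :: "('a, 'm) monoid_scheme \<Rightarrow> 'a \<Rightarrow> 'a \<Rightarrow> 'a" where
  "conjH H b = (\<lambda>h. inv\<^bsub>H\<^esub> b \<otimes>\<^bsub>H\<^esub> h \<otimes>\<^bsub>H\<^esub> b)"

definition OutV :: "('a, 'm) monoid_scheme \<Rightarrow> 'a set \<Rightarrow> ('a \<Rightarrow> 'a)
    \<Rightarrow> (('a + bool) list set \<Rightarrow> ('a + bool) list set) set set" where
  "OutV H K \<phi> = {outer_class (HNN H K \<phi>) (hnn_alpha H K \<phi> (conjH H b) a) | b a.
      b \<in> normalizer H K \<and> a \<in> carrier H \<and>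
      b \<otimes>\<^bsub>H\<^esub> a \<otimes>\<^bsub>H\<^esub> inv\<^bsub>H\<^esub> (\<phi> b) \<in> centralizer H (\<phi> ` K)}"

definition CK :: "('a, 'm) monoid_scheme \<Rightarrow> 'a set \<Rightarrow> ('a \<Rightarrow> 'a)
    \<Rightarrow> (('a + bool) list set \<Rightarrow> ('a + bool) list set) set set" where
  "CK H K \<phi> = {outer_class (HNN H K \<phi>) (hnn_alpha H K \<phi> (\<lambda>h. h) a) | a.
      a \<in> centralizer H (\<phi> ` K)}"

end

theory Submission
  imports Defs
begin


fun invl :: "('a,'m) monoid_scheme \<Rightarrow> 'a + bool \<Rightarrow> 'a + bool" where
  "invl H (Inl h) = Inl (inv\<^bsub>H\<^esub> h)"
| "invl H (Inr b) = Inr (\<not> b)"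

definition invw :: "('a,'m) monoid_scheme \<Rightarrow> ('a + bool) list \<Rightarrow> ('a + bool) list" where
  "invw H w = rev (map (invl H) w)"

definition evl :: "('a,'m) monoid_scheme \<Rightarrow> ('b,'n) monoid_scheme \<Rightarrow> ('a \<Rightarrow> 'b) \<Rightarrow> 'b \<Rightarrow> 'a + bool \<Rightarrow> 'b" where
  "evl H M f \<tau> l = (case l of Inl h \<Rightarrow> if h \<in> carrier H then f h else \<one>\<^bsub>M\<^esub> | Inr b \<Rightarrow> if b then \<tau> else inv\<^bsub>M\<^esub> \<tau>)"

definition ev :: "('a,'m) monoid_scheme \<Rightarrow> ('b,'n) monoid_scheme \<Rightarrow> ('a \<Rightarrow> 'b) \<Rightarrow> 'b \<Rightarrow> ('a + bool) list \<Rightarrow> 'b" where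
  "ev H M f \<tau> w = foldr (\<lambda>l acc. evl H M f \<tau> l \<otimes>\<^bsub>M\<^esub> acc) w \<one>\<^bsub>M\<^esub>"

locale hnn = group H for H :: "('a, 'm) monoid_scheme" (structure) +
  fixes K :: "'a set" and \<phi> :: "'a \<Rightarrow> 'a"
  assumes K_sub: "subgroup K H" and K_ne: "K \<noteq> carrier H"
    and phi_hom: "\<phi> \<in> hom H H" and phi_bij: "bij_betw \<phi> (carrier H) (carrier H)"
begin

abbreviation "E \<equiv> hnn_eq H K \<phi>"
abbreviation "cls \<equiv> hnn_class H K \<phi>"
abbreviation "W \<equiv> hnn_words H"
abbreviation "G \<equiv> HNN H K \<phi>"
abbreviation "inc \<equiv> hnn_inc H K \<phi>"
abbreviation "tt \<equiv> hnn_t H K \<phi>"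

lemma phi_closed: "x \<in> carrier H \<Longrightarrow> \<phi> x \<in> carrier H"
  using phi_hom by (auto simp: hom_def)
lemma phi_mult: "x \<in> carrier H \<Longrightarrow> y \<in> carrier H \<Longrightarrow> \<phi> (x \<otimes> y) = \<phi> x \<otimes> \<phi> y"
  using phi_hom by (auto simp: hom_def)
lemma K_carr: "k \<in> K \<Longrightarrow> k \<in> carrier H"
  using K_sub subgroup.subset by blast

lemma E_left: "E w v \<Longrightarrow> E (u @ w) (u @ v)"
  using hnn_eq.cong[of H K \<phi> w v u "[]"] by simp
lemma E_right: "E w v \<Longrightarrow> E (w @ z) (v @ z)"
  using hnn_eq.cong[of H K \<phi> w v "[]" z] by simp
lemma E_app: "E w w' \<Longrightarrow> E v v' \<Longrightarrow> E (w @ v) (w' @ v')"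
  by (meson E_left E_right hnn_eq.trans)
lemma E_refl: "E w w" by (rule hnn_eq.refl)
lemma E_sym: "E w v \<Longrightarrow> E v w" by (rule hnn_eq.sym)
lemma E_trans: "E u v \<Longrightarrow> E v w \<Longrightarrow> E u w" by (rule hnn_eq.trans)

lemma W_app[simp]: "w @ v \<in> W \<longleftrightarrow> w \<in> W \<and> v \<in> W"
  by (auto simp: hnn_words_def)
lemma W_Cons[simp]: "a # v \<in> W \<longleftrightarrow> (case a of Inl h \<Rightarrow> h \<in> carrier H | Inr _ \<Rightarrow> True) \<and> v \<in> W"
  by (auto simp: hnn_words_def)
lemma W_Nil[simp]: "[] \<in> W" by (auto simp: hnn_words_def)

lemma in_cls: "w \<in> W \<Longrightarrow> w \<in> cls w"
  by (simp add: hnn_class_def hnn_eq.refl)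
lemma cls_eq: "w \<in> W \<Longrightarrow> v \<in> W \<Longrightarrow> cls w = cls v \<longleftrightarrow> E w v"
  unfolding hnn_class_def by (auto intro: E_trans E_sym E_refl)
lemma cls_eqI: "E w v \<Longrightarrow> cls w = cls v"
  unfolding hnn_class_def by (auto intro: E_trans E_sym E_refl)

lemma carrier_G: "carrier G = cls ` W" by (simp add: HNN_def)
lemma one_G: "\<one>\<^bsub>G\<^esub> = cls []" by (simp add: HNN_def)

lemma mult_cls: assumes "w \<in> W" "v \<in> W" shows "cls w \<otimes>\<^bsub>G\<^esub> cls v = cls (w @ v)"
proof -
  define x where "x = (SOME x. x \<in> cls w)"
  define y where "y = (SOME y. y \<in> cls v)"
  have "x \<in> cls w" unfolding x_def by (rule someI, rule in_cls[OF assms(1)])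
  moreover have "y \<in> cls v" unfolding y_def by (rule someI, rule in_cls[OF assms(2)])
  ultimately have "E w x" "E v y" by (auto simp: hnn_class_def)
  hence "E (x @ y) (w @ v)" by (meson E_app E_sym)
  thus ?thesis by (simp add: HNN_def hnn_mult_def x_def[symmetric] y_def[symmetric] cls_eqI)
qed

lemma E_inv_letter: "[a] \<in> W \<Longrightarrow> E [invl H a, a] []"
proof (cases a)
  case (Inl h)
  assume "[a] \<in> W"
  hence h: "h \<in> carrier H" using Inl by simp
  have "E [Inl (inv h), Inl h] [Inl (inv h \<otimes> h)]" by (rule hnn_eq.h_mult) (use h in auto)
  also have "inv h \<otimes> h = \<one>" using h by simp
  finally show ?thesis using Inl by (auto intro: E_trans hnn_eq.h_one)
next
  case (Inr b) thus ?thesis by (cases b) (auto intro: hnn_eq.t_tinv hnn_eq.tinv_t)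
qed

lemma invw_W: "w \<in> W \<Longrightarrow> invw H w \<in> W"
proof (induction w)
  case (Cons a w)
  have "[invl H a] \<in> W" using Cons.prems by (cases a) (auto)
  thus ?case using Cons by (auto simp: invw_def)
qed (simp add: invw_def)

lemma E_invw: "w \<in> W \<Longrightarrow> E (invw H w @ w) []"
proof (induction w)
  case Nil thus ?case by (simp add: invw_def E_refl)
next
  case (Cons a w)
  have "invw H (a # w) @ a # w = invw H w @ ([invl H a, a] @ w)" by (simp add: invw_def)
  moreover have "E (invw H w @ ([invl H a, a] @ w)) (invw H w @ ([] @ w))"
    by (rule E_left, rule E_right, rule E_inv_letter) (use Cons.prems in simp)
  ultimately show ?case using Cons by (auto intro: E_trans)
qed

lemma group_G: "group G"
proof (rule groupI)
  show "\<one>\<^bsub>G\<^esub> \<in> carrier G" by (simp add: carrier_G one_G)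
next
  fix x y assume "x \<in> carrier G" "y \<in> carrier G"
  thus "x \<otimes>\<^bsub>G\<^esub> y \<in> carrier G" by (auto simp: carrier_G mult_cls)
next
  fix x y z assume "x \<in> carrier G" "y \<in> carrier G" "z \<in> carrier G"
  thus "x \<otimes>\<^bsub>G\<^esub> y \<otimes>\<^bsub>G\<^esub> z = x \<otimes>\<^bsub>G\<^esub> (y \<otimes>\<^bsub>G\<^esub> z)" by (auto simp: carrier_G mult_cls)
next
  fix x assume "x \<in> carrier G"
  thus "\<one>\<^bsub>G\<^esub> \<otimes>\<^bsub>G\<^esub> x = x" by (auto simp: carrier_G one_G mult_cls)
next
  fix x assume "x \<in> carrier G"
  then obtain w where w: "w \<in> W" "x = cls w" by (auto simp: carrier_G)
  show "\<exists>y\<in>carrier G. y \<otimes>\<^bsub>G\<^esub> x = \<one>\<^bsub>G\<^esub>"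
  proof (rule bexI[of _ "cls (invw H w)"])
    show "cls (invw H w) \<in> carrier G" using w invw_W by (simp add: carrier_G)
    have "cls (invw H w @ w) = cls []" by (rule cls_eqI, rule E_invw, rule w(1))
    thus "cls (invw H w) \<otimes>\<^bsub>G\<^esub> x = \<one>\<^bsub>G\<^esub>" using w invw_W by (simp add: mult_cls one_G)
  qed
qed

lemma inc_carr: "h \<in> carrier H \<Longrightarrow> inc h \<in> carrier G"
  by (auto simp: hnn_inc_def carrier_G)
lemma tt_carr: "tt \<in> carrier G"
  by (auto simp: hnn_t_def carrier_G)
lemma inc_mult: "h \<in> carrier H \<Longrightarrow> h' \<in> carrier H \<Longrightarrow> inc h \<otimes>\<^bsub>G\<^esub> inc h' = inc (h \<otimes> h')"
  by (auto simp: hnn_inc_def mult_cls intro!: cls_eqI hnn_eq.h_mult)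
lemma inc_hom: "inc \<in> hom H G"
  by (auto simp: hom_def inc_carr inc_mult)
lemma inc_one: "inc \<one> = \<one>\<^bsub>G\<^esub>"
  by (auto simp: hnn_inc_def one_G intro!: cls_eqI hnn_eq.h_one)
lemma tinv_eq: "inv\<^bsub>G\<^esub> tt = cls [Inr False]"
proof -
  interpret Gg: group G by (rule group_G)
  have "cls [Inr False] \<otimes>\<^bsub>G\<^esub> tt = \<one>\<^bsub>G\<^esub>"
    by (auto simp: hnn_t_def mult_cls one_G intro!: cls_eqI hnn_eq.tinv_t)
  thus ?thesis using tt_carr by (metis Gg.inv_equality W_Cons W_Nil carrier_G imageI sum.case(2))
qed
lemma inc_inv: "h \<in> carrier H \<Longrightarrow> inv\<^bsub>G\<^esub> (inc h) = inc (inv h)"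
  using group_hom.hom_inv[of H G inc h] inc_hom group_G by (simp add: group_hom_def group_hom_axioms_def is_group)
lemma rel_G: "k \<in> K \<Longrightarrow> tt \<otimes>\<^bsub>G\<^esub> inc k \<otimes>\<^bsub>G\<^esub> inv\<^bsub>G\<^esub> tt = inc (\<phi> k)"
  unfolding tinv_eq using K_carr[of k] by (auto simp: hnn_t_def hnn_inc_def mult_cls intro!: cls_eqI hnn_eq.rel)

lemma cls_Cons: "l # w \<in> W \<Longrightarrow> cls (l # w) = cls [l] \<otimes>\<^bsub>G\<^esub> cls w"
  by (subst mult_cls) (auto split: sum.splits)

lemma cls_letter: "[l] \<in> W \<Longrightarrow> cls [l] = (case l of Inl h \<Rightarrow> inc h | Inr b \<Rightarrow> if b then tt else inv\<^bsub>G\<^esub> tt)"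
  using tinv_eq by (auto simp: hnn_inc_def hnn_t_def split: sum.splits)

lemma G_induct[consumes 1, case_names one inc t tinv]:
  assumes "x \<in> carrier G"
    and "P \<one>\<^bsub>G\<^esub>"
    and "\<And>h y. h \<in> carrier H \<Longrightarrow> y \<in> carrier G \<Longrightarrow> P y \<Longrightarrow> P (inc h \<otimes>\<^bsub>G\<^esub> y)"
    and "\<And>y. y \<in> carrier G \<Longrightarrow> P y \<Longrightarrow> P (tt \<otimes>\<^bsub>G\<^esub> y)"
    and "\<And>y. y \<in> carrier G \<Longrightarrow> P y \<Longrightarrow> P (inv\<^bsub>G\<^esub> tt \<otimes>\<^bsub>G\<^esub> y)"
  shows "P x"
proof -
  obtain w where w: "w \<in> W" "x = cls w" using assms(1) by (auto simp: carrier_G)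
  have "P (cls w)" using w(1)
  proof (induction w)
    case Nil thus ?case using assms(2) by (simp add: one_G)
  next
    case (Cons l w)
    have wW: "w \<in> W" and cw: "cls w \<in> carrier G" using Cons.prems by (auto simp: carrier_G)
    have lW: "[l] \<in> W" using Cons.prems by (auto split: sum.splits)
    have eq: "cls (l # w) = cls [l] \<otimes>\<^bsub>G\<^esub> cls w" by (rule cls_Cons[OF Cons.prems])
    show ?case
    proof (cases l)
      case (Inl h) thus ?thesis using eq cls_letter[OF lW] assms(3)[of h "cls w"] lW cw Cons.IH[OF wW] by simp
    next
      case (Inr b) thus ?thesis using eq cls_letter[OF lW] assms(4,5)[of "cls w"] cw Cons.IH[OF wW] by (cases b) simp_all
    qed
  qed
  thus ?thesis using w by simp
qed

lemma hom_G_eq: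
  assumes M: "group M" and F1: "F1 \<in> hom G M" and F2: "F2 \<in> hom G M"
    and hH: "\<And>h. h \<in> carrier H \<Longrightarrow> F1 (inc h) = F2 (inc h)" and ht: "F1 tt = F2 tt"
    and x: "x \<in> carrier G"
  shows "F1 x = F2 x"
proof -
  interpret Gg: group G by (rule group_G)
  interpret M: group M by (rule M)
  have gh1: "group_hom G M F1" and gh2: "group_hom G M F2"
    using F1 F2 by (auto simp: group_hom_def group_hom_axioms_def Gg.is_group M.is_group)
  show ?thesis using x
  proof (induction x rule: G_induct)
    case one thus ?case using group_hom.hom_one[OF gh1] group_hom.hom_one[OF gh2] by simp
  next
    case (inc h y) thus ?case using F1 F2 hH inc_carr by (simp add: hom_mult)
  next
    case (t y) thus ?case using F1 F2 ht tt_carr by (simp add: hom_mult)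
  next
    case (tinv y) thus ?case using F1 F2 ht tt_carr group_hom.hom_inv[OF gh1] group_hom.hom_inv[OF gh2]
      by (simp add: hom_mult)
  qed
qed

end

context hnn begin

context
  fixes M :: "('b, 'n) monoid_scheme" and f :: "'a \<Rightarrow> 'b" and \<tau> :: 'b
  assumes M: "group M" and f: "f \<in> hom H M" and \<tau>: "\<tau> \<in> carrier M"
    and frel: "\<And>k. k \<in> K \<Longrightarrow> \<tau> \<otimes>\<^bsub>M\<^esub> f k \<otimes>\<^bsub>M\<^esub> inv\<^bsub>M\<^esub> \<tau> = f (\<phi> k)"
begin

interpretation M: group M by (rule M)

lemma evl_closed: "evl H M f \<tau> l \<in> carrier M"
  using f \<tau> by (auto simp: evl_def hom_def split: sum.splits)
lemma ev_closed: "ev H M f \<tau> w \<in> carrier M"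
  by (induction w) (auto simp: ev_def evl_closed)
lemma ev_append: "ev H M f \<tau> (w @ v) = ev H M f \<tau> w \<otimes>\<^bsub>M\<^esub> ev H M f \<tau> v"
proof (induction w)
  case Nil thus ?case using ev_closed by (simp add: ev_def)
next
  case (Cons l w)
  have "ev H M f \<tau> ((l # w) @ v) = evl H M f \<tau> l \<otimes>\<^bsub>M\<^esub> ev H M f \<tau> (w @ v)" by (simp add: ev_def)
  also have "\<dots> = evl H M f \<tau> l \<otimes>\<^bsub>M\<^esub> (ev H M f \<tau> w \<otimes>\<^bsub>M\<^esub> ev H M f \<tau> v)" using Cons by simp
  also have "\<dots> = (evl H M f \<tau> l \<otimes>\<^bsub>M\<^esub> ev H M f \<tau> w) \<otimes>\<^bsub>M\<^esub> ev H M f \<tau> v"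
    using evl_closed ev_closed by (simp add: M.m_assoc)
  finally show ?case by (simp add: ev_def)
qed
lemma ev_single: "ev H M f \<tau> [l] = evl H M f \<tau> l"
  using evl_closed by (simp add: ev_def)

lemma E_ev: "E w v \<Longrightarrow> ev H M f \<tau> w = ev H M f \<tau> v"
proof (induction rule: hnn_eq.induct)
  case (cong w v u z) thus ?case by (simp add: ev_append)
next
  case (h_mult h h')
  hence "f h' \<in> carrier M" "f h \<in> carrier M" using f by (auto simp: hom_def)
  thus ?case using f h_mult by (simp add: ev_def evl_def hom_def M.m_closed)
next
  case h_one thus ?case using f by (simp add: ev_single evl_def hom_one M.is_monoid is_monoid)
       (simp add: ev_def)
next
  case t_tinv thus ?case using \<tau> by (simp add: ev_def evl_def)
next
  case tinv_t thus ?case using \<tau> by (simp add: ev_def evl_def)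
next
  case (rel k)
  have kc: "k \<in> carrier H" using K_carr rel by simp
  have "ev H M f \<tau> [Inr True, Inl k, Inr False] = \<tau> \<otimes>\<^bsub>M\<^esub> f k \<otimes>\<^bsub>M\<^esub> inv\<^bsub>M\<^esub> \<tau>"
  proof -
    have "f k \<in> carrier M" using kc f by (auto simp: hom_def)
    thus ?thesis using kc \<tau> by (simp add: ev_def evl_def M.m_assoc)
  qed
  thus ?case using frel[OF rel] kc phi_closed[OF kc] by (simp add: ev_single evl_def)
qed (auto)

definition hext where "hext = restrict (\<lambda>A. ev H M f \<tau> (SOME w. w \<in> A)) (carrier G)"

lemma hext_cls: "w \<in> W \<Longrightarrow> hext (cls w) = ev H M f \<tau> w"
proof -
  assume w: "w \<in> W"
  have "(SOME v. v \<in> cls w) \<in> cls w" by (rule someI, rule in_cls[OF w])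
  hence "E w (SOME v. v \<in> cls w)" by (simp add: hnn_class_def)
  thus ?thesis using w by (auto simp: hext_def carrier_G E_ev)
qed

lemma hext_hom: "hext \<in> hom G M"
  by (auto simp: hom_def carrier_G hext_cls ev_closed mult_cls ev_append)

lemma hext_inc: "h \<in> carrier H \<Longrightarrow> hext (inc h) = f h"
  by (simp add: hnn_inc_def hext_cls ev_single evl_def)
lemma hext_t: "hext tt = \<tau>"
  by (simp add: hnn_t_def hext_cls ev_single evl_def)
lemma hext_ext: "hext \<in> extensional (carrier G)"
  by (simp add: hext_def)

end
end

context hnn begin

definition "Pd \<delta> a \<longleftrightarrow> \<delta> \<in> hom H H \<and> a \<in> carrier H \<and> (\<forall>k\<in>K. \<delta> k \<in> K \<and> a \<otimes> \<phi> (\<delta> k) \<otimes> inv a = \<delta> (\<phi> k))"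

definition "Phi \<delta> a = hext TYPE(unit) G (\<lambda>h. inc (\<delta> h)) (inc a \<otimes>\<^bsub>G\<^esub> tt)"

lemma Phi_props:
  assumes P: "Pd \<delta> a"
  shows "Phi \<delta> a \<in> hom G G" "\<And>h. h \<in> carrier H \<Longrightarrow> Phi \<delta> a (inc h) = inc (\<delta> h)"
    "Phi \<delta> a tt = inc a \<otimes>\<^bsub>G\<^esub> tt" "Phi \<delta> a \<in> extensional (carrier G)"
proof -
  interpret Gg: group G by (rule group_G)
  have dh: "\<delta> \<in> hom H H" and a: "a \<in> carrier H" using P by (auto simp: Pd_def)
  have dc: "\<And>x. x \<in> carrier H \<Longrightarrow> \<delta> x \<in> carrier H" using dh by (auto simp: hom_def)
  have f: "(\<lambda>h. inc (\<delta> h)) \<in> hom H G"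
  proof (rule homI)
    fix x assume "x \<in> carrier H" thus "inc (\<delta> x) \<in> carrier G" using dc inc_carr by blast
  next
    fix x y assume "x \<in> carrier H" "y \<in> carrier H"
    thus "inc (\<delta> (x \<otimes> y)) = inc (\<delta> x) \<otimes>\<^bsub>G\<^esub> inc (\<delta> y)"
      using dc dh by (simp add: hom_mult inc_mult)
  qed
  have tau: "inc a \<otimes>\<^bsub>G\<^esub> tt \<in> carrier G" using a inc_carr tt_carr by simp
  have frel: "(inc a \<otimes>\<^bsub>G\<^esub> tt) \<otimes>\<^bsub>G\<^esub> inc (\<delta> k) \<otimes>\<^bsub>G\<^esub> inv\<^bsub>G\<^esub> (inc a \<otimes>\<^bsub>G\<^esub> tt) = inc (\<delta> (\<phi> k))"
    if k: "k \<in> K" for k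
  proof -
    have dk: "\<delta> k \<in> K" and eq: "a \<otimes> \<phi> (\<delta> k) \<otimes> inv a = \<delta> (\<phi> k)" using P k by (auto simp: Pd_def)
    have dkc: "\<delta> k \<in> carrier H" using K_carr dk by blast
    have "(inc a \<otimes>\<^bsub>G\<^esub> tt) \<otimes>\<^bsub>G\<^esub> inc (\<delta> k) \<otimes>\<^bsub>G\<^esub> inv\<^bsub>G\<^esub> (inc a \<otimes>\<^bsub>G\<^esub> tt)
        = inc a \<otimes>\<^bsub>G\<^esub> (tt \<otimes>\<^bsub>G\<^esub> inc (\<delta> k) \<otimes>\<^bsub>G\<^esub> inv\<^bsub>G\<^esub> tt) \<otimes>\<^bsub>G\<^esub> inv\<^bsub>G\<^esub> (inc a)"
      using a dkc inc_carr tt_carr by (simp add: Gg.inv_mult_group Gg.m_assoc)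
    also have "\<dots> = inc a \<otimes>\<^bsub>G\<^esub> inc (\<phi> (\<delta> k)) \<otimes>\<^bsub>G\<^esub> inc (inv a)"
      using rel_G[OF dk] inc_inv[OF a] by simp
    also have "\<dots> = inc (a \<otimes> \<phi> (\<delta> k) \<otimes> inv a)" using a dkc phi_closed by (simp add: inc_mult)
    finally show ?thesis using eq by simp
  qed
  show "Phi \<delta> a \<in> hom G G" unfolding Phi_def by (rule hext_hom[OF group_G f tau frel])
  show "\<And>h. h \<in> carrier H \<Longrightarrow> Phi \<delta> a (inc h) = inc (\<delta> h)" unfolding Phi_def by (rule hext_inc[OF group_G f tau frel])
  show "Phi \<delta> a tt = inc a \<otimes>\<^bsub>G\<^esub> tt" unfolding Phi_def by (rule hext_t[OF group_G f tau frel])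
  show "Phi \<delta> a \<in> extensional (carrier G)" unfolding Phi_def by (rule hext_ext[OF group_G f tau frel])
qed

definition "spec \<delta> a F \<longleftrightarrow> F \<in> auto G \<and> (\<forall>h \<in> carrier H. F (inc h) = inc (\<delta> h)) \<and> F tt = inc a \<otimes>\<^bsub>G\<^esub> tt"

lemma spec_unique:
  assumes "spec \<delta> a F1" "spec \<delta> a F2" shows "F1 = F2"
proof (rule extensionalityI)
  show "F1 \<in> extensional (carrier G)" "F2 \<in> extensional (carrier G)"
    using assms by (auto simp: spec_def auto_def Bij_def)
  fix x assume "x \<in> carrier G"
  have "F1 \<in> hom G G" "F2 \<in> hom G G" using assms by (auto simp: spec_def auto_def)
  thus "F1 x = F2 x" using hom_G_eq[OF group_G, of F1 F2] assms \<open>x \<in> carrier G\<close> by (auto simp: spec_def)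
qed

lemma alpha_spec:
  assumes P: "Pd \<delta> a" and P': "Pd \<delta>' a'"
    and inv1: "\<And>h. h \<in> carrier H \<Longrightarrow> \<delta>' (\<delta> h) = h" and inv2: "\<And>h. h \<in> carrier H \<Longrightarrow> \<delta> (\<delta>' h) = h"
    and aa: "\<delta>' a \<otimes> a' = \<one>"
  shows "spec \<delta> a (hnn_alpha H K \<phi> \<delta> a)"
proof -
  interpret Gg: group G by (rule group_G)
  have dh: "\<delta> \<in> hom H H" and a: "a \<in> carrier H" using P by (auto simp: Pd_def)
  have dh': "\<delta>' \<in> hom H H" and a': "a' \<in> carrier H" using P' by (auto simp: Pd_def)
  have dc: "\<And>x. x \<in> carrier H \<Longrightarrow> \<delta> x \<in> carrier H" using dh by (auto simp: hom_def)
  have dc': "\<And>x. x \<in> carrier H \<Longrightarrow> \<delta>' x \<in> carrier H" using dh' by (auto simp: hom_def)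
  have da': "\<delta> a' \<otimes> a = \<one>"
  proof -
    have "\<delta> (\<delta>' a \<otimes> a') = \<delta> \<one>" using aa by simp
    hence "a \<otimes> \<delta> a' = \<one>" using dh a a' dc' inv2 by (simp add: hom_mult hom_one is_monoid)
    thus ?thesis using a a' dc by (simp add: inv_comm)
  qed
  note F = Phi_props[OF P] and F' = Phi_props[OF P']
  define idG where "idG = (\<lambda>x\<in>carrier G. x)"
  have idhom: "idG \<in> hom G G" by (auto simp: idG_def hom_def)
  have comp1: "\<forall>x\<in>carrier G. Phi \<delta>' a' (Phi \<delta> a x) = x"
  proof
    fix x assume x: "x \<in> carrier G"
    have "compose (carrier G) (Phi \<delta>' a') (Phi \<delta> a) x = idG x"
    proof (rule hom_G_eq[OF group_G _ idhom _ _ x])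
      show "compose (carrier G) (Phi \<delta>' a') (Phi \<delta> a) \<in> hom G G"
        using F(1) F'(1) Gg.hom_compose by blast
      show "compose (carrier G) (Phi \<delta>' a') (Phi \<delta> a) (inc h) = idG (inc h)" if "h \<in> carrier H" for h
        using that F(2) F'(2) inc_carr dc inv1 by (simp add: compose_def idG_def)
      have "Phi \<delta>' a' (inc a \<otimes>\<^bsub>G\<^esub> tt) = inc (\<delta>' a) \<otimes>\<^bsub>G\<^esub> (inc a' \<otimes>\<^bsub>G\<^esub> tt)"
        using F'(1,2,3) a inc_carr tt_carr by (simp add: hom_mult)
      also have "\<dots> = tt" using a a' dc' aa inc_carr tt_carr inc_one
        by (simp add: Gg.m_assoc[symmetric] inc_mult)
      finally show "compose (carrier G) (Phi \<delta>' a') (Phi \<delta> a) tt = idG tt"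
        using F(3) tt_carr by (simp add: compose_def idG_def)
    qed
    thus "Phi \<delta>' a' (Phi \<delta> a x) = x" using x by (simp add: compose_def idG_def)
  qed
  have comp2: "\<forall>x\<in>carrier G. Phi \<delta> a (Phi \<delta>' a' x) = x"
  proof
    fix x assume x: "x \<in> carrier G"
    have "compose (carrier G) (Phi \<delta> a) (Phi \<delta>' a') x = idG x"
    proof (rule hom_G_eq[OF group_G _ idhom _ _ x])
      show "compose (carrier G) (Phi \<delta> a) (Phi \<delta>' a') \<in> hom G G"
        using F(1) F'(1) Gg.hom_compose by blast
      show "compose (carrier G) (Phi \<delta> a) (Phi \<delta>' a') (inc h) = idG (inc h)" if "h \<in> carrier H" for h
        using that F(2) F'(2) inc_carr dc' inv2 by (simp add: compose_def idG_def)
      have "Phi \<delta> a (inc a' \<otimes>\<^bsub>G\<^esub> tt) = inc (\<delta> a') \<otimes>\<^bsub>G\<^esub> (inc a \<otimes>\<^bsub>G\<^esub> tt)"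
        using F(1,2,3) a' inc_carr tt_carr by (simp add: hom_mult)
      also have "\<dots> = tt" using a a' dc da' inc_carr tt_carr inc_one
        by (simp add: Gg.m_assoc[symmetric] inc_mult)
      finally show "compose (carrier G) (Phi \<delta> a) (Phi \<delta>' a') tt = idG tt"
        using F'(3) tt_carr by (simp add: compose_def idG_def)
    qed
    thus "Phi \<delta> a (Phi \<delta>' a' x) = x" using x by (simp add: compose_def idG_def)
  qed
  have bij: "bij_betw (Phi \<delta> a) (carrier G) (carrier G)"
    by (rule bij_betw_byWitness[of _ "Phi \<delta>' a'"]) (use comp1 comp2 F(1) F'(1) in \<open>auto simp: hom_def\<close>)
  have sp: "spec \<delta> a (Phi \<delta> a)"
    using F bij by (auto simp: spec_def auto_def Bij_def)
  have "hnn_alpha H K \<phi> \<delta> a = Phi \<delta> a"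
    unfolding hnn_alpha_def
    by (rule the_equality) (use sp spec_unique in \<open>auto simp: spec_def\<close>)
  thus ?thesis using sp by simp
qed

end



fun np :: "'a \<Rightarrow> ('a \<times> bool) list \<Rightarrow> bool" where
  "np u ((s2,e2)#(s1,e1)#L) = ((e2 = (\<not>e1) \<longrightarrow> s2 \<noteq> u) \<and> np u ((s1,e1)#L))"
| "np u _ = True"

definition sylw :: "('a \<times> bool) list \<Rightarrow> ('a + bool) list" where
  "sylw L = concat (map (\<lambda>(s,e). [Inl s, Inr e]) L)"

lemma sylw_simps[simp]: "sylw [] = []" "sylw (x # L) = [Inl (fst x), Inr (snd x)] @ sylw L"
  "sylw (L @ L') = sylw L @ sylw L'"
  by (auto simp: sylw_def split: prod.splits)

lemma np_tl: "np u (x # L) \<Longrightarrow> np u L"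
  by (cases x; cases L) auto

context hnn begin

definition "PP e = (if e then \<phi> ` K else K)"
definition "rep e x = (if x \<in> PP e then \<one> else (SOME r. r \<in> x <# PP e))"
definition "phinv p = inv_into (carrier H) \<phi> p"
definition "tq e p = (if e then phinv p else \<phi> p)"

definition "act_t e st = (let L = fst st; h = snd st; r = rep e h; q = tq e (inv r \<otimes> h) in
   if L \<noteq> [] \<and> snd (hd L) = (\<not> e) \<and> r = \<one> then (tl L, fst (hd L) \<otimes> q) else ((r, e) # L, q))"

definition "act_l l st = (case l of Inl x \<Rightarrow> if x \<in> carrier H then (fst st, snd st \<otimes> x) else st | Inr e \<Rightarrow> act_t e st)"

definition "actw w st = fold act_l w st"

definition "validL L \<longleftrightarrow> (\<forall>(s,e)\<in>set L. s \<in> carrier H \<and> rep e s = s) \<and> np \<one> L"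
definition "valid st \<longleftrightarrow> snd st \<in> carrier H \<and> validL (fst st)"

definition "nfw st = sylw (rev (fst st)) @ [Inl (snd st)]"

lemma PP_sub: "subgroup (PP e) H"
proof (cases e)
  case True
  have gh: "group_hom H H \<phi>" using phi_hom by (simp add: group_hom_def group_hom_axioms_def is_group)
  show ?thesis using True group_hom.subgroup_img_is_subgroup[OF gh K_sub] by (simp add: PP_def)
qed (simp add: PP_def K_sub)

lemma PP_carr: "p \<in> PP e \<Longrightarrow> p \<in> carrier H"
  using PP_sub subgroup.subset by blast

lemma PP_ne: "\<exists>y\<in>carrier H. y \<notin> PP e"
proof (cases e)
  case False thus ?thesis using K_ne K_sub subgroup.subset by (fastforce simp: PP_def)
next
  case True
  have inj: "inj_on \<phi> (carrier H)" and im: "\<phi> ` carrier H = carrier H" using phi_bij by (auto simp: bij_betw_def)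
  have "K \<subseteq> carrier H" using K_sub subgroup.subset by blast
  hence "\<phi> ` K \<noteq> carrier H" using K_ne inj im inj_on_image_eq_iff[OF inj] by (metis order_refl)
  moreover have "\<phi> ` K \<subseteq> carrier H" using \<open>K \<subseteq> carrier H\<close> phi_closed by blast
  ultimately show ?thesis using True by (auto simp: PP_def)
qed

lemma rep_props:
  assumes x: "x \<in> carrier H"
  shows "rep e x \<in> carrier H" "inv (rep e x) \<otimes> x \<in> PP e"
proof -
  interpret P: subgroup "PP e" H by (rule PP_sub)
  have "rep e x \<in> carrier H \<and> inv (rep e x) \<otimes> x \<in> PP e"
  proof (cases "x \<in> PP e")
    case True thus ?thesis using x by (simp add: rep_def)
  next
    case False
    have "x \<in> x <# PP e" using x by (auto simp: l_coset_def intro!: bexI[of _ \<one>])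
    hence "(SOME r. r \<in> x <# PP e) \<in> x <# PP e" by (rule someI)
    then obtain p where p: "p \<in> PP e" "(SOME r. r \<in> x <# PP e) = x \<otimes> p" by (auto simp: l_coset_def)
    have pc: "p \<in> carrier H" using p PP_carr by blast
    have "inv (x \<otimes> p) \<otimes> x = inv p" using x pc by (simp add: inv_mult_group m_assoc)
    thus ?thesis using False p x pc by (simp add: rep_def)
  qed
  thus "rep e x \<in> carrier H" "inv (rep e x) \<otimes> x \<in> PP e" by auto
qed

lemma rep_decomp: "x \<in> carrier H \<Longrightarrow> rep e x \<otimes> (inv (rep e x) \<otimes> x) = x"
  using rep_props by (simp add: m_assoc[symmetric])

lemma rep_one_iff: "x \<in> carrier H \<Longrightarrow> rep e x = \<one> \<longleftrightarrow> x \<in> PP e"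
  using rep_props[of x e] by (auto simp: rep_def)

lemma rep_mult: assumes x: "x \<in> carrier H" and p: "p \<in> PP e" shows "rep e (x \<otimes> p) = rep e x"
proof -
  interpret P: subgroup "PP e" H by (rule PP_sub)
  have pc: "p \<in> carrier H" using p PP_carr by blast
  have iff: "x \<otimes> p \<in> PP e \<longleftrightarrow> x \<in> PP e"
  proof
    assume "x \<otimes> p \<in> PP e"
    hence "x \<otimes> p \<otimes> inv p \<in> PP e" using p by (simp add: P.m_closed P.m_inv_closed)
    thus "x \<in> PP e" using x pc by (simp add: m_assoc)
  next
    assume "x \<in> PP e" thus "x \<otimes> p \<in> PP e" using p by (simp add: P.m_closed)
  qed
  have "x \<otimes> p \<in> x <# PP e" using p by (auto simp: l_coset_def)
  hence "x <# PP e = (x \<otimes> p) <# PP e" using l_repr_independence[OF _ x PP_sub] by blast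
  thus ?thesis using iff by (simp add: rep_def)
qed

lemma rep_idem: "x \<in> carrier H \<Longrightarrow> rep e (rep e x) = rep e x"
proof -
  assume x: "x \<in> carrier H"
  have "rep e (rep e x \<otimes> (inv (rep e x) \<otimes> x)) = rep e (rep e x)"
    by (rule rep_mult) (use rep_props[OF x] in auto)
  thus ?thesis using rep_decomp[OF x] by simp
qed

lemma tq_props:
  assumes p: "p \<in> PP e"
  shows "tq e p \<in> PP (\<not> e)" "tq (\<not> e) (tq e p) = p"
proof -
  have inj: "inj_on \<phi> (carrier H)" and im: "\<phi> ` carrier H = carrier H" using phi_bij by (auto simp: bij_betw_def)
  have Kc: "K \<subseteq> carrier H" using K_sub subgroup.subset by blast
  show "tq e p \<in> PP (\<not> e)" "tq (\<not> e) (tq e p) = p"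
  proof (atomize(full), cases e)
    case True
    then obtain k where k: "k \<in> K" "p = \<phi> k" using p by (auto simp: PP_def)
    have "phinv p = k" using k Kc inj by (auto simp: phinv_def inv_into_f_f subsetD)
    thus "tq e p \<in> PP (\<not> e) \<and> tq (\<not> e) (tq e p) = p" using True k by (simp add: tq_def PP_def)
  next
    case False
    hence "p \<in> K" using p by (simp add: PP_def)
    hence "phinv (\<phi> p) = p" using Kc inj by (auto simp: phinv_def inv_into_f_f subsetD)
    thus "tq e p \<in> PP (\<not> e) \<and> tq (\<not> e) (tq e p) = p" using False \<open>p \<in> K\<close> by (simp add: tq_def PP_def)
  qed
qed

lemma tq_carr: "p \<in> PP e \<Longrightarrow> tq e p \<in> carrier H"
  using tq_props PP_carr by blast


lemma act_t_eq: "act_t e (L, h) = (if L \<noteq> [] \<and> snd (hd L) = (\<not> e) \<and> rep e h = \<one>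
   then (tl L, fst (hd L) \<otimes> tq e (inv (rep e h) \<otimes> h)) else ((rep e h, e) # L, tq e (inv (rep e h) \<otimes> h)))"
  by (simp add: act_t_def Let_def)

lemma act_t_eq': "r = rep e h \<Longrightarrow> q = tq e (inv r \<otimes> h) \<Longrightarrow> act_t e (L, h) = (if L \<noteq> [] \<and> snd (hd L) = (\<not> e) \<and> r = \<one>
   then (tl L, fst (hd L) \<otimes> q) else ((r, e) # L, q))"
  by (simp add: act_t_eq)

lemma validL_tl: "validL L \<Longrightarrow> validL (tl L)"
  by (cases L) (auto simp: validL_def dest: np_tl)

lemma validL_hd: "validL ((s,e) # L) \<Longrightarrow> s \<in> carrier H \<and> rep e s = s"
  by (auto simp: validL_def)

lemma V_t: assumes v: "valid (L, h)" shows "valid (act_t e (L, h))"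
proof -
  have h: "h \<in> carrier H" and vL: "validL L" using v by (auto simp: valid_def)
  define r where "r = rep e h"
  define q where "q = tq e (inv r \<otimes> h)"
  have r: "r \<in> carrier H" "inv r \<otimes> h \<in> PP e" using rep_props[OF h] by (auto simp: r_def)
  have q: "q \<in> carrier H" using tq_carr[OF r(2)] by (simp add: q_def)
  show ?thesis
  proof (cases "L \<noteq> [] \<and> snd (hd L) = (\<not> e) \<and> r = \<one>")
    case True
    then obtain s' L' where L: "L = (s', \<not> e) # L'" by (cases L) auto
    have "s' \<in> carrier H" using vL L by (auto simp: validL_def)
    have "act_t e (L, h) = (tl L, fst (hd L) \<otimes> q)" using act_t_eq'[OF r_def q_def, of L] True by simp
    thus ?thesis using L q validL_tl[OF vL] \<open>s' \<in> carrier H\<close> by (simp add: valid_def)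
  next
    case False
    have np: "np \<one> ((r, e) # L)"
    proof (cases L)
      case (Cons a L')
      obtain s' e' where "a = (s', e')" by (cases a)
      thus ?thesis using False Cons vL by (auto simp: validL_def)
    qed simp
    have "validL ((r, e) # L)" using np vL r rep_idem[OF h] by (auto simp: validL_def r_def)
    moreover have "act_t e (L, h) = ((r, e) # L, q)" by (subst act_t_eq'[OF r_def q_def]) (simp only: if_not_P[OF False])
    ultimately show ?thesis using q by (simp add: valid_def)
  qed
qed

lemma Inv_t: assumes v: "valid (L, h)" shows "act_t (\<not> e) (act_t e (L, h)) = (L, h)"
proof -
  have h: "h \<in> carrier H" and vL: "validL L" using v by (auto simp: valid_def)
  define r where "r = rep e h"
  define p where "p = inv r \<otimes> h"
  define q where "q = tq e p"
  have r: "r \<in> carrier H" "p \<in> PP e" "r \<otimes> p = h" using rep_props[OF h] rep_decomp[OF h] by (auto simp: r_def p_def)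
  have q: "q \<in> PP (\<not> e)" "tq (\<not> e) q = p" using tq_props[OF r(2)] by (auto simp: q_def)
  have qc: "q \<in> carrier H" using q PP_carr by blast
  have pc: "p \<in> carrier H" using r PP_carr by blast
  show ?thesis
  proof (cases "L \<noteq> [] \<and> snd (hd L) = (\<not> e) \<and> r = \<one>")
    case True
    then obtain s' L' where L: "L = (s', \<not> e) # L'" by (cases L) auto
    have s': "s' \<in> carrier H" "rep (\<not> e) s' = s'" using vL L by (auto simp: validL_def)
    have st1: "act_t e (L, h) = (L', s' \<otimes> q)"
      using True L act_t_eq'[OF r_def q_def[unfolded p_def], of L] by simp
    have rr: "rep (\<not> e) (s' \<otimes> q) = s'" using rep_mult[OF s'(1) q(1)] s'(2) by simp
    have nop: "\<not> (L' \<noteq> [] \<and> snd (hd L') = (\<not> \<not> e) \<and> s' = \<one>)"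
    proof
      assume a: "L' \<noteq> [] \<and> snd (hd L') = (\<not> \<not> e) \<and> s' = \<one>"
      then obtain s'' L'' where "L' = (s'', e) # L''" by (cases L') auto
      thus False using vL L a by (auto simp: validL_def)
    qed
    have "inv s' \<otimes> (s' \<otimes> q) = q" using s' qc by (simp add: m_assoc[symmetric])
    moreover have "act_t (\<not> e) (L', s' \<otimes> q) = ((s', \<not> e) # L', tq (\<not> e) (inv s' \<otimes> (s' \<otimes> q)))"
      by (subst act_t_eq'[OF rr[symmetric] HOL.refl]) (simp only: if_not_P[OF nop])
    ultimately have "act_t (\<not> e) (L', s' \<otimes> q) = ((s', \<not> e) # L', p)" using q by simp
    moreover have "p = h" using r True PP_carr by auto
    ultimately show ?thesis using st1 L by simp
  next
    case False
    have st1: "act_t e (L, h) = ((r, e) # L, q)"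
      by (subst act_t_eq'[OF r_def q_def[unfolded p_def]]) (simp only: if_not_P[OF False])
    have "rep (\<not> e) q = \<one>" using rep_one_iff[OF qc] q by simp
    hence "act_t (\<not> e) ((r, e) # L, q) = (L, r \<otimes> p)" using q qc by (simp add: act_t_eq)
    thus ?thesis using st1 r by simp
  qed
qed

lemma Rel_t: assumes v: "valid (L, h)" and k: "k \<in> K"
  shows "act_t False (fst (act_t True (L, h)), snd (act_t True (L, h)) \<otimes> k) = (L, h \<otimes> \<phi> k)"
proof -
  have h: "h \<in> carrier H" and vL: "validL L" using v by (auto simp: valid_def)
  have kc: "k \<in> carrier H" using K_carr k by blast
  define r where "r = rep True h"
  define p where "p = inv r \<otimes> h"
  define q where "q = tq True p"
  have r: "r \<in> carrier H" "p \<in> PP True" "r \<otimes> p = h" using rep_props[OF h] rep_decomp[OF h] by (auto simp: r_def p_def)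
  have q: "q \<in> K" "\<phi> q = p" using tq_props[OF r(2)] by (auto simp: q_def PP_def tq_def)
  have qc: "q \<in> carrier H" using q K_carr by blast
  have qk: "q \<otimes> k \<in> K" using q k K_sub by (simp add: subgroup.m_closed)
  have qkc: "q \<otimes> k \<in> carrier H" using qk K_carr by blast
  have phq: "\<phi> (q \<otimes> k) = p \<otimes> \<phi> k" using phi_mult qc kc q by simp
  show ?thesis
  proof (cases "L \<noteq> [] \<and> snd (hd L) = (\<not> True) \<and> r = \<one>")
    case True
    then obtain s' L' where L: "L = (s', False) # L'" by (cases L) auto
    have s': "s' \<in> carrier H" "rep False s' = s'" using vL L by (auto simp: validL_def)
    have st1: "act_t True (L, h) = (L', s' \<otimes> q)"
      using True L act_t_eq'[OF r_def q_def[unfolded p_def], of L] by simp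
    have e1: "s' \<otimes> q \<otimes> k = s' \<otimes> (q \<otimes> k)" using s' qc kc by (simp add: m_assoc)
    have rr: "rep False (s' \<otimes> (q \<otimes> k)) = s'" using rep_mult[OF s'(1), of "q \<otimes> k" False] qk s'(2) by (simp add: PP_def)
    have nop: "\<not> (L' \<noteq> [] \<and> snd (hd L') = (\<not> False) \<and> s' = \<one>)"
    proof
      assume a: "L' \<noteq> [] \<and> snd (hd L') = (\<not> False) \<and> s' = \<one>"
      then obtain s'' L'' where "L' = (s'', True) # L''" by (cases L') auto
      thus False using vL L a by (auto simp: validL_def)
    qed
    have "inv s' \<otimes> (s' \<otimes> (q \<otimes> k)) = q \<otimes> k" using s' qkc by (simp add: m_assoc[symmetric])
    moreover have "act_t False (L', s' \<otimes> (q \<otimes> k)) = ((s', False) # L', tq False (inv s' \<otimes> (s' \<otimes> (q \<otimes> k))))"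
      by (subst act_t_eq'[OF rr[symmetric] HOL.refl]) (simp only: if_not_P[OF nop])
    ultimately have "act_t False (L', s' \<otimes> q \<otimes> k) = ((s', False) # L', \<phi> (q \<otimes> k))" using e1 by (simp add: tq_def)
    moreover have "p = h" using r True PP_carr by auto
    ultimately show ?thesis using st1 L phq by simp
  next
    case False
    have st1: "act_t True (L, h) = ((r, True) # L, q)"
      by (subst act_t_eq'[OF r_def q_def[unfolded p_def]]) (simp only: if_not_P[OF False])
    have "rep False (q \<otimes> k) = \<one>" using rep_one_iff[OF qkc] qk by (simp add: PP_def)
    hence "act_t False ((r, True) # L, q \<otimes> k) = (L, r \<otimes> \<phi> (q \<otimes> k))" using qkc by (simp add: act_t_eq tq_def)
    moreover have "r \<otimes> \<phi> (q \<otimes> k) = h \<otimes> \<phi> k" using phq r q phi_closed kc by (simp add: m_assoc[symmetric] PP_carr)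
    ultimately show ?thesis using st1 by simp
  qed
qed

lemma V_l: "valid st \<Longrightarrow> valid (act_l l st)"
proof (cases st)
  case (Pair L h)
  assume v: "valid st"
  show ?thesis
  proof (cases l)
    case (Inr e) thus ?thesis using V_t[of L h e] v Pair by (simp add: act_l_def)
  qed (use v Pair in \<open>auto simp: act_l_def valid_def\<close>)
qed

lemma V_w: "valid st \<Longrightarrow> valid (actw w st)"
  by (induction w arbitrary: st) (auto simp: actw_def V_l)

lemma actw_append: "actw (w @ v) st = actw v (actw w st)"
  by (simp add: actw_def)
lemma actw_Cons: "actw (l # w) st = actw w (act_l l st)"
  by (simp add: actw_def)
lemma actw_Nil: "actw [] st = st"
  by (simp add: actw_def)

lemma E_act: "E w v \<Longrightarrow> \<forall>st. valid st \<longrightarrow> actw w st = actw v st"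
proof (induction rule: hnn_eq.induct)
  case (cong w v u z)
  show ?case
  proof (intro allI impI)
    fix st assume "valid st"
    hence "valid (actw u st)" by (rule V_w)
    hence "actw w (actw u st) = actw v (actw u st)" using cong.IH by blast
    thus "actw (u @ w @ z) st = actw (u @ v @ z) st" by (simp add: actw_append)
  qed
next
  case (h_mult h h')
  show ?case by (auto simp: actw_def act_l_def valid_def m_assoc h_mult)
next
  case h_one
  show ?case by (auto simp: actw_def act_l_def valid_def)
next
  case t_tinv
  show ?case using Inv_t[of _ _ True] by (auto simp: actw_def act_l_def)
next
  case tinv_t
  show ?case using Inv_t[of _ _ False] by (auto simp: actw_def act_l_def)
next
  case (rel k)
  have kc: "k \<in> carrier H" "\<phi> k \<in> carrier H" using K_carr rel phi_closed by auto
  show ?case using Rel_t[OF _ rel] kc by (auto simp: actw_def act_l_def)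
qed auto


lemma E_ctx: "E w v \<Longrightarrow> x = u @ w @ z \<Longrightarrow> y = u @ v @ z \<Longrightarrow> E x y"
  using hnn_eq.cong by blast

lemma SW: assumes p: "p \<in> PP e" shows "E [Inl p, Inr e] [Inr e, Inl (tq e p)]"
proof (cases e)
  case True
  then obtain k where k: "k \<in> K" "p = \<phi> k" using p by (auto simp: PP_def)
  have inj: "inj_on \<phi> (carrier H)" using phi_bij by (auto simp: bij_betw_def)
  have tq: "tq e p = k" using True k inj K_carr by (simp add: tq_def phinv_def inv_into_f_f)
  have "E [Inl (\<phi> k), Inr True] ([Inr True, Inl k, Inr False] @ [Inr True])"
    using E_right[OF E_sym[OF hnn_eq.rel[OF k(1)]]] by simp
  moreover have "E ([Inr True, Inl k] @ [Inr False, Inr True] @ []) ([Inr True, Inl k] @ [] @ [])"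
    by (rule hnn_eq.cong, rule hnn_eq.tinv_t)
  ultimately show ?thesis using True k tq by (auto intro: E_trans)
next
  case False
  hence k: "p \<in> K" using p by (simp add: PP_def)
  have tq: "tq e p = \<phi> p" using False by (simp add: tq_def)
  have "E [Inr False, Inl (\<phi> p)] ([Inr False] @ [Inr True, Inl p, Inr False])"
    using E_left[OF E_sym[OF hnn_eq.rel[OF k]], of "[Inr False]"] by simp
  moreover have "E ([] @ [Inr False, Inr True] @ [Inl p, Inr False]) ([] @ [] @ [Inl p, Inr False])"
    by (rule hnn_eq.cong, rule hnn_eq.tinv_t)
  ultimately show ?thesis using False tq by (auto intro: E_trans E_sym)
qed

lemma E_tt: "E [Inr (\<not> e), Inr e] []"
  by (cases e) (auto intro: hnn_eq.t_tinv hnn_eq.tinv_t)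

lemma NFW: assumes v: "valid (L, h)" and l: "[l] \<in> W"
  shows "E (nfw (L, h) @ [l]) (nfw (act_l l (L, h)))"
proof (cases l)
  case (Inl x)
  have x: "x \<in> carrier H" using l Inl by simp
  have h: "h \<in> carrier H" using v by (simp add: valid_def)
  show ?thesis using Inl x
    by (auto simp: nfw_def act_l_def intro!: E_ctx[OF hnn_eq.h_mult[OF h x], of _ "sylw (rev L)" "[]"])
next
  case (Inr e)
  have h: "h \<in> carrier H" and vL: "validL L" using v by (auto simp: valid_def)
  define S where "S = sylw (rev L)"
  define r where "r = rep e h"
  define p where "p = inv r \<otimes> h"
  define q where "q = tq e p"
  have r: "r \<in> carrier H" "p \<in> PP e" "r \<otimes> p = h" using rep_props[OF h] rep_decomp[OF h] by (auto simp: r_def p_def)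
  have pc: "p \<in> carrier H" using r PP_carr by blast
  have q: "q \<in> carrier H" using tq_carr[OF r(2)] by (simp add: q_def)
  have A: "E (nfw (L, h) @ [l]) (S @ [Inl r] @ [Inl p, Inr e])"
    using Inr E_ctx[OF E_sym[OF hnn_eq.h_mult[OF r(1) pc]], of _ S "[Inr e]"] r(3) by (simp add: nfw_def S_def)
  have B: "E (S @ [Inl r] @ [Inl p, Inr e]) (S @ [Inl r] @ [Inr e, Inl q])"
    using E_ctx[OF SW[OF r(2)], of _ "S @ [Inl r]" "[]"] by (simp add: q_def)
  have AB: "E (nfw (L, h) @ [l]) (S @ [Inl r, Inr e, Inl q])" using E_trans[OF A B] by simp
  show ?thesis
  proof (cases "L \<noteq> [] \<and> snd (hd L) = (\<not> e) \<and> r = \<one>")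
    case True
    then obtain s' L' where L: "L = (s', \<not> e) # L'" by (cases L) auto
    have s': "s' \<in> carrier H" using vL L by (auto simp: validL_def)
    have st: "act_l l (L, h) = (L', s' \<otimes> q)"
      using Inr True L by (simp add: act_l_def, subst act_t_eq'[OF r_def q_def[unfolded p_def]]) simp
    define S' where "S' = sylw (rev L')"
    have S: "S = S' @ [Inl s', Inr (\<not> e)]" using L by (simp add: S_def S'_def)
    have C1: "E (S @ [Inl r, Inr e, Inl q]) ((S' @ [Inl s', Inr (\<not> e)]) @ [] @ [Inr e, Inl q])"
      using E_ctx[OF hnn_eq.h_one, of _ "S' @ [Inl s', Inr (\<not> e)]" "[Inr e, Inl q]"] S True by simp
    have C2: "E ((S' @ [Inl s', Inr (\<not> e)]) @ [] @ [Inr e, Inl q]) ((S' @ [Inl s']) @ [] @ [Inl q])"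
      using E_ctx[OF E_tt[of e], of _ "S' @ [Inl s']" "[Inl q]"] by simp
    have C3: "E ((S' @ [Inl s']) @ [] @ [Inl q]) (S' @ [Inl (s' \<otimes> q)] @ [])"
      using E_ctx[OF hnn_eq.h_mult[OF s' q], of _ S' "[]"] by simp
    show ?thesis using E_trans[OF AB E_trans[OF C1 E_trans[OF C2 C3]]] st by (simp add: nfw_def S'_def)
  next
    case False
    have st: "act_l l (L, h) = ((r, e) # L, q)"
      using Inr by (simp add: act_l_def, subst act_t_eq'[OF r_def q_def[unfolded p_def]]) (simp only: if_not_P[OF False])
    show ?thesis using AB st by (simp add: nfw_def S_def)
  qed
qed

lemma NFW_all: "w \<in> W \<Longrightarrow> valid st \<Longrightarrow> E (nfw st @ w) (nfw (actw w st))"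
proof (induction w arbitrary: st)
  case Nil thus ?case by (simp add: actw_Nil E_refl)
next
  case (Cons l w)
  obtain L h where st: "st = (L, h)" by (cases st)
  have lW: "[l] \<in> W" and wW: "w \<in> W" using Cons.prems by (auto split: sum.splits)
  have "E (nfw st @ l # w) (nfw (act_l l st) @ w)"
    using E_right[OF NFW[OF Cons.prems(2)[unfolded st] lW], of w] st by simp
  moreover have "E (nfw (act_l l st) @ w) (nfw (actw w (act_l l st)))"
    by (rule Cons.IH[OF wW V_l[OF Cons.prems(2)]])
  ultimately show ?case by (simp add: actw_Cons E_trans)
qed

lemma valid0: "h \<in> carrier H \<Longrightarrow> valid ([], h)"
  by (simp add: valid_def validL_def)

lemma NF_word: assumes w: "w \<in> W" shows "E w (nfw (actw w ([], \<one>)))"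
proof -
  have "E ([] @ w) ([Inl \<one>] @ w)" by (rule E_right, rule E_sym, rule hnn_eq.h_one)
  moreover have "E ([Inl \<one>] @ w) (nfw (actw w ([], \<one>)))"
    using NFW_all[OF w valid0[OF one_closed]] by (simp add: nfw_def)
  ultimately show ?thesis by (auto intro: E_trans)
qed

lemma inc_inj: assumes h: "h \<in> carrier H" "h' \<in> carrier H" and eq: "inc h = inc h'" shows "h = h'"
proof -
  have "E [Inl h] [Inl h']" using eq h cls_eq[of "[Inl h]" "[Inl h']"] by (simp add: hnn_inc_def)
  hence "actw [Inl h] ([], \<one>) = actw [Inl h'] ([], \<one>)" using E_act valid0[OF one_closed] by blast
  thus ?thesis using h by (simp add: actw_def act_l_def)
qed

lemma phinv_one: "phinv \<one> = \<one>"
proof -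
  have inj: "inj_on \<phi> (carrier H)" using phi_bij by (auto simp: bij_betw_def)
  have "\<phi> \<one> = \<one>" using phi_hom by (simp add: hom_one is_monoid)
  thus ?thesis using inj by (metis inv_into_f_f one_closed phinv_def)
qed

lemma britton_t: assumes h: "h \<in> carrier H" and h': "h' \<in> carrier H"
  and eq: "tt \<otimes>\<^bsub>G\<^esub> inc h \<otimes>\<^bsub>G\<^esub> inv\<^bsub>G\<^esub> tt = inc h'" shows "h \<in> K"
proof (rule ccontr)
  assume nk: "h \<notin> K"
  have "tt \<otimes>\<^bsub>G\<^esub> inc h \<otimes>\<^bsub>G\<^esub> inv\<^bsub>G\<^esub> tt = cls [Inr True, Inl h, Inr False]"
    unfolding tinv_eq using h by (simp add: hnn_t_def hnn_inc_def mult_cls)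
  hence "E [Inr True, Inl h, Inr False] [Inl h']" using eq h h' cls_eq[of "[Inr True, Inl h, Inr False]" "[Inl h']"]
    by (simp add: hnn_inc_def)
  hence eq2: "actw [Inr True, Inl h, Inr False] ([], \<one>) = actw [Inl h'] ([], \<one>)" using E_act valid0[OF one_closed] by blast
  have one_PP: "\<one> \<in> PP True" using PP_sub subgroup.one_closed by blast
  have r1: "rep True \<one> = \<one>" using rep_one_iff[OF one_closed] one_PP by simp
  have s1: "act_t True ([], \<one>) = ([(\<one>, True)], \<one>)"
    by (simp add: act_t_eq r1 tq_def phinv_one)
  have rh: "rep False h \<noteq> \<one>" using rep_one_iff[OF h, of False] nk by (simp add: PP_def)
  have "fst (act_t False ([(\<one>, True)], \<one> \<otimes> h)) \<noteq> []" using rh h by (simp add: act_t_eq)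
  moreover have "fst (actw [Inr True, Inl h, Inr False] ([], \<one>)) = fst (act_t False ([(\<one>, True)], \<one> \<otimes> h))"
    using s1 h by (simp add: actw_def act_l_def)
  moreover have "fst (actw [Inl h'] ([], \<one>)) = []" using h' by (simp add: actw_def act_l_def)
  ultimately show False using eq2 by simp
qed

end



context hnn begin

lemma Len:
  assumes vL: "validL L" and h: "h \<in> carrier H"
    and hM: "M \<noteq> [] \<Longrightarrow> h \<in> PP (\<not> snd (hd M))"
    and cM: "M \<noteq> [] \<Longrightarrow> L \<noteq> [] \<Longrightarrow> snd (last L) = (\<not> snd (hd M)) \<Longrightarrow> fst (last L) \<notin> PP (snd (last L))"
  shows "\<exists>N h'. actw (sylw (rev L)) (M, h) = (N @ M, h') \<and> h' \<in> carrier H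
     \<and> (N @ M \<noteq> [] \<longrightarrow> h' \<in> PP (\<not> snd (hd (N @ M))))
     \<and> (L \<noteq> [] \<longrightarrow> N \<noteq> [] \<and> snd (hd N) = snd (hd L) \<and> last N = (rep (snd (last L)) (h \<otimes> fst (last L)), snd (last L)))
     \<and> (L = [] \<longrightarrow> N = [] \<and> h' = h)"
  using vL cM
proof (induction L)
  case Nil thus ?case using h hM by (auto simp: actw_Nil)
next
  case (Cons a L')
  obtain s e where a: "a = (s, e)" by (cases a)
  have vL': "validL L'" using Cons.prems(1) validL_tl by fastforce
  have s: "s \<in> carrier H" "rep e s = s" using Cons.prems(1) a by (auto simp: validL_def)
  have cM': "M \<noteq> [] \<Longrightarrow> L' \<noteq> [] \<Longrightarrow> snd (last L') = (\<not> snd (hd M)) \<Longrightarrow> fst (last L') \<notin> PP (snd (last L'))"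
    using Cons.prems(2) by simp
  obtain N' h1 where IH: "actw (sylw (rev L')) (M, h) = (N' @ M, h1)" "h1 \<in> carrier H"
     "N' @ M \<noteq> [] \<longrightarrow> h1 \<in> PP (\<not> snd (hd (N' @ M)))"
     "L' \<noteq> [] \<longrightarrow> N' \<noteq> [] \<and> snd (hd N') = snd (hd L') \<and> last N' = (rep (snd (last L')) (h \<otimes> fst (last L')), snd (last L'))"
     "L' = [] \<longrightarrow> N' = [] \<and> h1 = h"
    using Cons.IH[OF vL' cM'] by blast
  define x where "x = h1 \<otimes> s"
  have xc: "x \<in> carrier H" using IH(2) s by (simp add: x_def)
  have step: "actw (sylw (rev (a # L'))) (M, h) = act_t e (N' @ M, x)"
    using IH(1) s a by (simp add: actw_append actw_def act_l_def x_def)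
  have nop: "\<not> (N' @ M \<noteq> [] \<and> snd (hd (N' @ M)) = (\<not> e) \<and> rep e x = \<one>)"
  proof
    assume A: "N' @ M \<noteq> [] \<and> snd (hd (N' @ M)) = (\<not> e) \<and> rep e x = \<one>"
    interpret P: subgroup "PP e" H by (rule PP_sub)
    have h1P: "h1 \<in> PP e" using IH(3) A by simp
    have xP: "x \<in> PP e" using A rep_one_iff[OF xc] by simp
    have "inv h1 \<otimes> x = s" using IH(2) s by (simp add: x_def m_assoc[symmetric])
    hence sP: "s \<in> PP e" using h1P xP by (metis P.m_closed P.m_inv_closed)
    show False
    proof (cases "L' = []")
      case True
      hence "M \<noteq> []" "snd (hd M) = (\<not> e)" using IH(5) A by auto
      thus False using Cons.prems(2) True a sP by simp
    next
      case False
      then obtain s1 e1 L'' where L': "L' = (s1, e1) # L''" by (cases L') auto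
      have "snd (hd N') = e1" using IH(4) False L' by simp
      hence "e1 = (\<not> e)" using A IH(4) False by simp
      hence "s \<noteq> \<one>" using Cons.prems(1) a L' by (auto simp: validL_def)
      moreover have "s = \<one>" using s sP rep_one_iff[OF s(1), of e] by simp
      ultimately show False by simp
    qed
  qed
  define r where "r = rep e x"
  define q where "q = tq e (inv r \<otimes> x)"
  have r: "r \<in> carrier H" "inv r \<otimes> x \<in> PP e" using rep_props[OF xc] by (auto simp: r_def)
  have q: "q \<in> PP (\<not> e)" using tq_props(1)[OF r(2)] by (simp add: q_def)
  have qc: "q \<in> carrier H" using q PP_carr by blast
  have st: "act_t e (N' @ M, x) = ((r, e) # N' @ M, q)"
    by (subst act_t_eq'[OF r_def q_def]) (use nop in \<open>simp only: r_def[symmetric] if_not_P if_False\<close>)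
  show ?case
  proof (intro exI conjI impI)
    show "actw (sylw (rev (a # L'))) (M, h) = (((r, e) # N') @ M, q)" using step st by simp
    show "q \<in> carrier H" by (rule qc)
    show "q \<in> PP (\<not> snd (hd (((r, e) # N') @ M)))" using q by simp
    show "(r, e) # N' \<noteq> []" by simp
    show "snd (hd ((r, e) # N')) = snd (hd (a # L'))" using a by simp
    show "last ((r, e) # N') = (rep (snd (last (a # L'))) (h \<otimes> fst (last (a # L'))), snd (last (a # L')))"
    proof (cases "L' = []")
      case True thus ?thesis using IH(5) a by (simp add: r_def x_def)
    next
      case False thus ?thesis using IH(4) by simp
    qed
  qed (auto)
qed

lemma centralizer_H:
  assumes c: "c \<in> carrier G" and comm: "\<And>h. h \<in> carrier H \<Longrightarrow> c \<otimes>\<^bsub>G\<^esub> inc h = inc h \<otimes>\<^bsub>G\<^esub> c"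
  shows "c \<in> inc ` carrier H"
proof -
  obtain w where w: "w \<in> W" "c = cls w" using c by (auto simp: carrier_G)
  obtain L h0 where st: "actw w ([], \<one>) = (L, h0)" by (cases "actw w ([], \<one>)")
  have v: "valid (L, h0)" using V_w[OF valid0[OF one_closed], of w] st by simp
  have h0: "h0 \<in> carrier H" and vL: "validL L" using v by (auto simp: valid_def)
  have Ew: "E w (nfw (L, h0))" using NF_word[OF w(1)] st by simp
  show ?thesis
  proof (cases "L = []")
    case True
    have "c = inc h0" using w Ew True by (simp add: nfw_def hnn_inc_def cls_eqI)
    thus ?thesis using h0 by blast
  next
    case False
    obtain s1 e1 where last: "last L = (s1, e1)" by (cases "last L")
    have "(s1, e1) \<in> set L" using False last last_in_set by metis
    hence s1: "s1 \<in> carrier H" "rep e1 s1 = s1" using vL by (auto simp: validL_def)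
    obtain y where y: "y \<in> carrier H" "y \<notin> PP e1" using PP_ne by blast
    define h where "h = s1 \<otimes> y \<otimes> inv s1"
    have hc: "h \<in> carrier H" using s1 y by (simp add: h_def)
    have "cls (w @ [Inl h]) = c \<otimes>\<^bsub>G\<^esub> inc h" using w hc by (simp add: hnn_inc_def mult_cls)
    also have "\<dots> = inc h \<otimes>\<^bsub>G\<^esub> c" by (rule comm[OF hc])
    also have "\<dots> = cls (Inl h # w)" using w hc by (simp add: hnn_inc_def mult_cls)
    finally have "E (w @ [Inl h]) (Inl h # w)" using w hc cls_eq[of "w @ [Inl h]" "Inl h # w"] by simp
    hence eq: "actw (w @ [Inl h]) ([], \<one>) = actw (Inl h # w) ([], \<one>)" using E_act valid0[OF one_closed] by blast
    have lhs: "actw (w @ [Inl h]) ([], \<one>) = (L, h0 \<otimes> h)" using st hc by (simp add: actw_append actw_def act_l_def)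
    have "actw (Inl h # w) ([], \<one>) = actw w ([], h)" using hc by (simp add: actw_Cons act_l_def)
    also have "\<dots> = actw (nfw (L, h0)) ([], h)" using E_act[OF Ew] valid0[OF hc] by blast
    also have "\<dots> = act_l (Inl h0) (actw (sylw (rev L)) ([], h))" by (simp add: nfw_def actw_append actw_def)
    finally have rhs: "actw (Inl h # w) ([], \<one>) = act_l (Inl h0) (actw (sylw (rev L)) ([], h))" .
    obtain N h' where N: "actw (sylw (rev L)) ([], h) = (N @ [], h')"
      "L \<noteq> [] \<longrightarrow> N \<noteq> [] \<and> snd (hd N) = snd (hd L) \<and> last N = (rep (snd (last L)) (h \<otimes> fst (last L)), snd (last L))"
      using Len[OF vL hc, of "[]"] by auto
    have "fst (act_l (Inl h0) (N, h')) = N" by (simp add: act_l_def)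
    moreover have "(L, h0 \<otimes> h) = act_l (Inl h0) (N, h')" using eq lhs rhs N(1) by simp
    ultimately have "L = N" by (metis fst_conv)
    hence "rep e1 (h \<otimes> s1) = s1" using N(2) False last by simp
    moreover have "h \<otimes> s1 = s1 \<otimes> y" using s1 y by (simp add: h_def m_assoc)
    ultimately have "rep e1 (s1 \<otimes> y) = s1" by simp
    hence "inv s1 \<otimes> (s1 \<otimes> y) \<in> PP e1" using rep_props(2)[of "s1 \<otimes> y" e1] s1 y by simp
    hence "y \<in> PP e1" using s1 y by (simp add: m_assoc[symmetric])
    thus ?thesis using y by simp
  qed
qed

end



lemma (in group) cancel_l[simp]: "x \<in> carrier G \<Longrightarrow> y \<in> carrier G \<Longrightarrow> x \<otimes> (inv x \<otimes> y) = y"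
  by (simp add: m_assoc[symmetric])
lemma (in group) cancel_l2[simp]: "x \<in> carrier G \<Longrightarrow> y \<in> carrier G \<Longrightarrow> inv x \<otimes> (x \<otimes> y) = y"
  by (simp add: m_assoc[symmetric])

context hnn begin

lemma phi_inv: "x \<in> carrier H \<Longrightarrow> \<phi> (inv x) = inv (\<phi> x)"
  using group_hom.hom_inv[of H H \<phi> x] phi_hom by (simp add: group_hom_def group_hom_axioms_def is_group)
lemma phi_one: "\<phi> \<one> = \<one>"
  using phi_hom by (simp add: hom_one is_monoid)

lemma Kc: "K \<subseteq> carrier H" using K_sub subgroup.subset by blast

lemma norm_sub: "subgroup (normalizer H K) H"
  by (rule normalizer_imp_subgroup[OF Kc])

lemma norm_carr: "b \<in> normalizer H K \<Longrightarrow> b \<in> carrier H"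
  using norm_sub subgroup.subset by blast

lemma norm_conj: assumes b: "b \<in> normalizer H K" and k: "k \<in> K"
  shows "b \<otimes> k \<otimes> inv b \<in> K" "inv b \<otimes> k \<otimes> b \<in> K"
proof -
  have bc: "b \<in> carrier H" by (rule norm_carr[OF b])
  have eq: "b <# K #> inv b = K" using b Kc by (simp add: normalizer_def stabilizer_def)
  have "b \<otimes> k \<otimes> inv b \<in> b <# K #> inv b" using k by (auto simp: l_coset_def r_coset_def)
  thus "b \<otimes> k \<otimes> inv b \<in> K" using eq by simp
  have "k \<in> b <# K #> inv b" using eq k by simp
  then obtain k' where k': "k' \<in> K" "k = b \<otimes> k' \<otimes> inv b" by (auto simp: l_coset_def r_coset_def)
  have "inv b \<otimes> k \<otimes> b = k'" using k' bc Kc by (auto simp: m_assoc)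
  thus "inv b \<otimes> k \<otimes> b \<in> K" using k' by simp
qed

lemma centr_carr: "c \<in> centralizer H S \<Longrightarrow> c \<in> carrier H"
  by (simp add: centralizer_def)
lemma centrD: "c \<in> centralizer H S \<Longrightarrow> s \<in> S \<Longrightarrow> c \<otimes> s = s \<otimes> c"
  by (simp add: centralizer_def)

lemma center_comm: "z \<in> center H \<Longrightarrow> h \<in> carrier H \<Longrightarrow> z \<otimes> h = h \<otimes> z"
  by (simp add: center_def centralizer_def)

lemma centr_mult: "c \<in> centralizer H S \<Longrightarrow> d \<in> centralizer H S \<Longrightarrow> S \<subseteq> carrier H \<Longrightarrow> c \<otimes> d \<in> centralizer H S"
proof -
  assume c: "c \<in> centralizer H S" and d: "d \<in> centralizer H S" and S: "S \<subseteq> carrier H"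
  have cc: "c \<in> carrier H" and dc: "d \<in> carrier H" using c d by (auto simp: centralizer_def)
  show ?thesis unfolding centralizer_def
  proof (intro CollectI conjI ballI)
    show "c \<otimes> d \<in> carrier H" using cc dc by simp
    fix s assume s: "s \<in> S"
    have sc: "s \<in> carrier H" using s S by blast
    have "c \<otimes> d \<otimes> s = c \<otimes> (d \<otimes> s)" using cc dc sc by (simp add: m_assoc)
    also have "\<dots> = c \<otimes> (s \<otimes> d)" using d s by (simp add: centralizer_def)
    also have "\<dots> = (c \<otimes> s) \<otimes> d" using cc dc sc by (simp add: m_assoc)
    also have "\<dots> = (s \<otimes> c) \<otimes> d" using c s by (simp add: centralizer_def)
    finally show "c \<otimes> d \<otimes> s = s \<otimes> (c \<otimes> d)" using cc dc sc by (simp add: m_assoc)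
  qed
qed

lemma centr_inv: "c \<in> centralizer H S \<Longrightarrow> S \<subseteq> carrier H \<Longrightarrow> inv c \<in> centralizer H S"
proof -
  assume c: "c \<in> centralizer H S" and S: "S \<subseteq> carrier H"
  have cc: "c \<in> carrier H" using c by (simp add: centralizer_def)
  show ?thesis unfolding centralizer_def
  proof (intro CollectI conjI ballI)
    show "inv c \<in> carrier H" using cc by simp
    fix s assume s: "s \<in> S"
    have sc: "s \<in> carrier H" using s S by blast
    have "c \<otimes> s = s \<otimes> c" using c s by (simp add: centralizer_def)
    hence "inv c \<otimes> (c \<otimes> s) \<otimes> inv c = inv c \<otimes> (s \<otimes> c) \<otimes> inv c" by simp
    thus "inv c \<otimes> s = s \<otimes> inv c" using cc sc by (simp add: m_assoc)
  qed
qed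

lemma center_centr: "z \<in> center H \<Longrightarrow> S \<subseteq> carrier H \<Longrightarrow> z \<in> centralizer H S"
  by (auto simp: center_def centralizer_def)

lemma phiK_carr: "\<phi> ` K \<subseteq> carrier H" using Kc phi_closed by blast

definition "cond b a \<longleftrightarrow> b \<in> normalizer H K \<and> a \<in> carrier H \<and> b \<otimes> a \<otimes> inv (\<phi> b) \<in> centralizer H (\<phi> ` K)"
definition "alpha b a = hnn_alpha H K \<phi> (conjH H b) a"

lemma conjH_hom: "b \<in> carrier H \<Longrightarrow> conjH H b \<in> hom H H"
  by (rule homI) (auto simp: conjH_def m_assoc)

lemma conjH_carr: "b \<in> carrier H \<Longrightarrow> h \<in> carrier H \<Longrightarrow> conjH H b h \<in> carrier H"
  by (simp add: conjH_def)

lemma Pd_inv: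
  assumes P: "Pd \<delta> a" and dh': "\<delta>' \<in> hom H H" and dK: "\<And>k. k \<in> K \<Longrightarrow> \<delta>' k \<in> K"
    and inv1: "\<And>h. h \<in> carrier H \<Longrightarrow> \<delta>' (\<delta> h) = h" and inv2: "\<And>h. h \<in> carrier H \<Longrightarrow> \<delta> (\<delta>' h) = h"
  shows "Pd \<delta>' (inv (\<delta>' a))"
proof -
  have a: "a \<in> carrier H" using P by (simp add: Pd_def)
  have dc': "\<And>x. x \<in> carrier H \<Longrightarrow> \<delta>' x \<in> carrier H" using dh' by (auto simp: hom_def)
  have gh: "group_hom H H \<delta>'" using dh' by (simp add: group_hom_def group_hom_axioms_def is_group)
  show ?thesis unfolding Pd_def
  proof (intro conjI ballI)
    show "\<delta>' \<in> hom H H" by (rule dh')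
    show "inv (\<delta>' a) \<in> carrier H" using a dc' by simp
    fix k assume k: "k \<in> K"
    show "\<delta>' k \<in> K" by (rule dK[OF k])
    have kc: "k \<in> carrier H" using k Kc by blast
    have "a \<otimes> \<phi> (\<delta> (\<delta>' k)) \<otimes> inv a = \<delta> (\<phi> (\<delta>' k))" using P dK[OF k] by (simp add: Pd_def)
    hence "a \<otimes> \<phi> k \<otimes> inv a = \<delta> (\<phi> (\<delta>' k))" using inv2 kc by simp
    hence "\<delta>' (a \<otimes> \<phi> k \<otimes> inv a) = \<phi> (\<delta>' k)" using inv1 phi_closed dc' kc by simp
    hence eq: "\<delta>' a \<otimes> \<delta>' (\<phi> k) \<otimes> inv (\<delta>' a) = \<phi> (\<delta>' k)"
      using a kc phi_closed dh' group_hom.hom_inv[OF gh] by (simp add: hom_mult)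
    have "inv (\<delta>' a) \<otimes> \<phi> (\<delta>' k) \<otimes> inv (inv (\<delta>' a)) = inv (\<delta>' a) \<otimes> (\<delta>' a \<otimes> \<delta>' (\<phi> k) \<otimes> inv (\<delta>' a)) \<otimes> \<delta>' a"
      using eq a dc' by simp
    also have "\<dots> = \<delta>' (\<phi> k)" using a dc' kc phi_closed by (simp add: m_assoc)
    finally show "inv (\<delta>' a) \<otimes> \<phi> (\<delta>' (k)) \<otimes> inv (inv (\<delta>' a)) = \<delta>' (\<phi> k)" .
  qed
qed

lemma cond_Pd: assumes c: "cond b a" shows "Pd (conjH H b) a"
proof -
  have bN: "b \<in> normalizer H K" and a: "a \<in> carrier H" and cC: "b \<otimes> a \<otimes> inv (\<phi> b) \<in> centralizer H (\<phi> ` K)"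
    using c by (auto simp: cond_def)
  have b: "b \<in> carrier H" by (rule norm_carr[OF bN])
  have pb: "\<phi> b \<in> carrier H" using b phi_closed by simp
  show ?thesis unfolding Pd_def
  proof (intro conjI ballI)
    show "conjH H b \<in> hom H H" by (rule conjH_hom[OF b])
    show "a \<in> carrier H" by (rule a)
    fix k assume k: "k \<in> K"
    have kc: "k \<in> carrier H" using k Kc by blast
    have pk: "\<phi> k \<in> carrier H" using kc phi_closed by simp
    show "conjH H b k \<in> K" using norm_conj(2)[OF bN k] by (simp add: conjH_def)
    have phc: "\<phi> (conjH H b k) = inv (\<phi> b) \<otimes> \<phi> k \<otimes> \<phi> b"
      using b kc by (simp add: conjH_def phi_mult phi_inv)
    define c where "c = b \<otimes> a \<otimes> inv (\<phi> b)"
    have cc: "c \<in> carrier H" using b a pb by (simp add: c_def)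
    have comm: "c \<otimes> \<phi> k = \<phi> k \<otimes> c" using cC k by (simp add: c_def centralizer_def)
    have "b \<otimes> (a \<otimes> (inv (\<phi> b) \<otimes> \<phi> k \<otimes> \<phi> b) \<otimes> inv a) \<otimes> inv b = c \<otimes> \<phi> k \<otimes> inv c"
      using b a pb pk by (simp add: c_def m_assoc inv_mult_group)
    also have "\<dots> = \<phi> k" using comm cc pk by (simp add: m_assoc)
    finally have "b \<otimes> (a \<otimes> (inv (\<phi> b) \<otimes> \<phi> k \<otimes> \<phi> b) \<otimes> inv a) \<otimes> inv b = \<phi> k" .
    hence "inv b \<otimes> (b \<otimes> (a \<otimes> (inv (\<phi> b) \<otimes> \<phi> k \<otimes> \<phi> b) \<otimes> inv a) \<otimes> inv b) \<otimes> b = inv b \<otimes> \<phi> k \<otimes> b"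
      by simp
    hence "a \<otimes> (inv (\<phi> b) \<otimes> \<phi> k \<otimes> \<phi> b) \<otimes> inv a = inv b \<otimes> \<phi> k \<otimes> b"
      using b a pb pk by (simp add: m_assoc)
    thus "a \<otimes> \<phi> (conjH H b k) \<otimes> inv a = conjH H b (\<phi> k)" using phc by (simp add: conjH_def)
  qed
qed

lemma spec_alpha: assumes c: "cond b a" shows "spec (conjH H b) a (alpha b a)"
proof -
  have bN: "b \<in> normalizer H K" using c by (simp add: cond_def)
  have b: "b \<in> carrier H" by (rule norm_carr[OF bN])
  have ib: "inv b \<in> normalizer H K" using bN norm_sub subgroup.m_inv_closed by fastforce
  have P: "Pd (conjH H b) a" by (rule cond_Pd[OF c])
  have inv1: "conjH H (inv b) (conjH H b h) = h" if "h \<in> carrier H" for h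
    using that b by (simp add: conjH_def m_assoc)
  have inv2: "conjH H b (conjH H (inv b) h) = h" if "h \<in> carrier H" for h
    using that b by (simp add: conjH_def m_assoc)
  have dK: "conjH H (inv b) k \<in> K" if "k \<in> K" for k
    using norm_conj(1)[OF bN that] b by (simp add: conjH_def)
  have P': "Pd (conjH H (inv b)) (inv (conjH H (inv b) a))"
    by (rule Pd_inv[OF P conjH_hom dK inv1 inv2]) (use b in auto)
  have a: "a \<in> carrier H" using c by (simp add: cond_def)
  show ?thesis unfolding alpha_def
    by (rule alpha_spec[OF P P' inv1 inv2]) (use a b conjH_carr in auto)
qed

end



context hnn begin

definition "innm g = (\<lambda>x\<in>carrier G. inv\<^bsub>G\<^esub> g \<otimes>\<^bsub>G\<^esub> x \<otimes>\<^bsub>G\<^esub> g)"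

lemma Inn_eq: "Inn G = {innm g | g. g \<in> carrier G}"
  by (simp add: Inn_def innm_def)

lemma innm_auto: assumes g: "g \<in> carrier G" shows "innm g \<in> auto G"
proof -
  interpret Gg: group G by (rule group_G)
  have hom: "innm g \<in> hom G G"
    by (rule homI) (use g in \<open>auto simp: innm_def Gg.m_assoc\<close>)
  have bij: "bij_betw (innm g) (carrier G) (carrier G)"
    by (rule bij_betw_byWitness[of _ "innm (inv\<^bsub>G\<^esub> g)"]) (use g in \<open>auto simp: innm_def Gg.m_assoc\<close>)
  show ?thesis using hom bij by (simp add: auto_def Bij_def innm_def)
qed

lemma auto_ext: "f \<in> auto G \<Longrightarrow> f \<in> extensional (carrier G)"
  by (simp add: auto_def Bij_def)
lemma auto_hom: "f \<in> auto G \<Longrightarrow> f \<in> hom G G"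
  by (simp add: auto_def)
lemma auto_carr: "f \<in> auto G \<Longrightarrow> x \<in> carrier G \<Longrightarrow> f x \<in> carrier G"
  by (auto simp: auto_def hom_def)
lemma auto_bij: "f \<in> auto G \<Longrightarrow> bij_betw f (carrier G) (carrier G)"
  by (simp add: auto_def Bij_def)

lemma compose_auto: assumes f: "f \<in> auto G" and g: "g \<in> auto G" shows "compose (carrier G) f g \<in> auto G"
proof -
  interpret Gg: group G by (rule group_G)
  have "f \<otimes>\<^bsub>BijGroup (carrier G)\<^esub> g \<in> auto G"
    using subgroup.m_closed[OF Gg.subgroup_auto f g] .
  moreover have "f \<in> Bij (carrier G)" "g \<in> Bij (carrier G)" using f g by (auto simp: auto_def)
  ultimately show ?thesis by (simp add: BijGroup_def)
qed

lemma autL_mult: "f \<in> auto G \<Longrightarrow> g \<in> auto G \<Longrightarrow> f \<otimes>\<^bsub>AutL G\<^esub> g = compose (carrier G) g f"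
  by (auto simp: AutL_def AutoGroup_def BijGroup_def auto_def)

lemma outer_class_eq: "f \<in> auto G \<Longrightarrow> outer_class G f = {compose (carrier G) f (innm g) | g. g \<in> carrier G}"
  by (auto simp: outer_class_def r_coset_def Inn_eq autL_mult innm_auto)

lemma hom_inv_G: "f \<in> hom G G \<Longrightarrow> x \<in> carrier G \<Longrightarrow> f (inv\<^bsub>G\<^esub> x) = inv\<^bsub>G\<^esub> (f x)"
  using group_hom.hom_inv[of G G f x] group_G by (simp add: group_hom_def group_hom_axioms_def)

lemma compose_innm: assumes f: "f \<in> auto G" and g: "g \<in> carrier G" and x: "x \<in> carrier G"
  shows "compose (carrier G) f (innm g) x = inv\<^bsub>G\<^esub> (f g) \<otimes>\<^bsub>G\<^esub> f x \<otimes>\<^bsub>G\<^esub> f g"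
proof -
  interpret Gg: group G by (rule group_G)
  show ?thesis using f g x auto_hom[OF f] hom_inv_G[OF auto_hom[OF f]]
    by (simp add: compose_def innm_def hom_mult)
qed

lemma compose_ext: "(\<And>x. x \<in> carrier G \<Longrightarrow> f1 (g1 x) = f2 (g2 x)) \<Longrightarrow> compose (carrier G) f1 g1 = compose (carrier G) f2 g2"
  unfolding compose_def by (rule restrict_ext) simp

lemma OC_self: assumes f: "f \<in> auto G" shows "f \<in> outer_class G f"
proof -
  interpret Gg: group G by (rule group_G)
  have "compose (carrier G) f (innm \<one>\<^bsub>G\<^esub>) = f"
  proof (rule extensionalityI[OF _ auto_ext[OF f]])
    show "compose (carrier G) f (innm \<one>\<^bsub>G\<^esub>) \<in> extensional (carrier G)" by (simp add: compose_def)
    fix x assume "x \<in> carrier G" thus "compose (carrier G) f (innm \<one>\<^bsub>G\<^esub>) x = f x"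
      by (simp add: compose_def innm_def)
  qed
  thus ?thesis using outer_class_eq[OF f] by force
qed

lemma OC_inner: assumes f: "f \<in> auto G" and g: "g \<in> carrier G"
  shows "outer_class G (compose (carrier G) f (innm g)) = outer_class G f"
proof -
  interpret Gg: group G by (rule group_G)
  have fg: "compose (carrier G) f (innm g) \<in> auto G" by (rule compose_auto[OF f innm_auto[OF g]])
  have key: "compose (carrier G) (compose (carrier G) f (innm g)) (innm h) = compose (carrier G) f (innm (h \<otimes>\<^bsub>G\<^esub> g))"
    if h: "h \<in> carrier G" for h
  proof (rule compose_ext)
    fix x assume x: "x \<in> carrier G"
    show "compose (carrier G) f (innm g) (innm h x) = f (innm (h \<otimes>\<^bsub>G\<^esub> g) x)"
      using x g h auto_carr[OF f] by (simp add: compose_def innm_def Gg.m_assoc Gg.inv_mult_group)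
  qed
  show ?thesis
  proof
    show "outer_class G (compose (carrier G) f (innm g)) \<subseteq> outer_class G f"
      unfolding outer_class_eq[OF fg] outer_class_eq[OF f] using key g by fastforce
  next
    show "outer_class G f \<subseteq> outer_class G (compose (carrier G) f (innm g))"
    proof
      fix u assume "u \<in> outer_class G f"
      then obtain h where h: "h \<in> carrier G" "u = compose (carrier G) f (innm h)" using outer_class_eq[OF f] by auto
      have "h \<otimes>\<^bsub>G\<^esub> inv\<^bsub>G\<^esub> g \<otimes>\<^bsub>G\<^esub> g = h" using h g by (simp add: Gg.m_assoc)
      hence "u = compose (carrier G) (compose (carrier G) f (innm g)) (innm (h \<otimes>\<^bsub>G\<^esub> inv\<^bsub>G\<^esub> g))"
        using key[of "h \<otimes>\<^bsub>G\<^esub> inv\<^bsub>G\<^esub> g"] h g by simp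
      thus "u \<in> outer_class G (compose (carrier G) f (innm g))"
        using outer_class_eq[OF fg] h g by blast
    qed
  qed
qed

lemma OC_mult: assumes f1: "f1 \<in> auto G" and f2: "f2 \<in> auto G"
  shows "outer_class G f1 <#>\<^bsub>AutL G\<^esub> outer_class G f2 = outer_class G (compose (carrier G) f2 f1)"
proof -
  interpret Gg: group G by (rule group_G)
  have f21: "compose (carrier G) f2 f1 \<in> auto G" by (rule compose_auto[OF f2 f1])
  show ?thesis
  proof
    show "outer_class G f1 <#>\<^bsub>AutL G\<^esub> outer_class G f2 \<subseteq> outer_class G (compose (carrier G) f2 f1)"
    proof
      fix u assume "u \<in> outer_class G f1 <#>\<^bsub>AutL G\<^esub> outer_class G f2"
      then obtain g1 g2 where g: "g1 \<in> carrier G" "g2 \<in> carrier G"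
        and u: "u = compose (carrier G) f1 (innm g1) \<otimes>\<^bsub>AutL G\<^esub> compose (carrier G) f2 (innm g2)"
        unfolding set_mult_def outer_class_eq[OF f1] outer_class_eq[OF f2] by blast
      have a1: "compose (carrier G) f1 (innm g1) \<in> auto G" by (rule compose_auto[OF f1 innm_auto[OF g(1)]])
      have a2: "compose (carrier G) f2 (innm g2) \<in> auto G" by (rule compose_auto[OF f2 innm_auto[OF g(2)]])
      obtain y where y: "y \<in> carrier G" "f1 y = g2" using auto_bij[OF f1] g(2) by (metis bij_betw_iff_bijections)
      have u2: "u = compose (carrier G) (compose (carrier G) f2 (innm g2)) (compose (carrier G) f1 (innm g1))"
        using u autL_mult[OF a1 a2] by simp
      have "u = compose (carrier G) (compose (carrier G) f2 f1) (innm (g1 \<otimes>\<^bsub>G\<^esub> y))"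
        unfolding u2
      proof (rule compose_ext)
        fix x assume x: "x \<in> carrier G"
        have e1: "f1 (innm (g1 \<otimes>\<^bsub>G\<^esub> y) x) = inv\<^bsub>G\<^esub> g2 \<otimes>\<^bsub>G\<^esub> f1 (innm g1 x) \<otimes>\<^bsub>G\<^esub> g2"
        proof -
          have "innm (g1 \<otimes>\<^bsub>G\<^esub> y) x = inv\<^bsub>G\<^esub> y \<otimes>\<^bsub>G\<^esub> innm g1 x \<otimes>\<^bsub>G\<^esub> y"
            using x y g by (simp add: innm_def Gg.m_assoc Gg.inv_mult_group)
          moreover have "innm g1 x \<in> carrier G" using x g by (simp add: innm_def)
          ultimately show ?thesis using y auto_hom[OF f1] hom_inv_G[OF auto_hom[OF f1]] by (simp add: hom_mult)
        qed
        have "innm g1 x \<in> carrier G" using x g by (simp add: innm_def)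
        hence "f1 (innm g1 x) \<in> carrier G" using auto_carr[OF f1] by blast
        thus "compose (carrier G) f2 (innm g2) (compose (carrier G) f1 (innm g1) x) = compose (carrier G) f2 f1 (innm (g1 \<otimes>\<^bsub>G\<^esub> y) x)"
          using x g y e1 by (simp add: compose_def innm_def)
      qed
      thus "u \<in> outer_class G (compose (carrier G) f2 f1)" using outer_class_eq[OF f21] g y by blast
    qed
  next
    show "outer_class G (compose (carrier G) f2 f1) \<subseteq> outer_class G f1 <#>\<^bsub>AutL G\<^esub> outer_class G f2"
    proof
      fix u assume "u \<in> outer_class G (compose (carrier G) f2 f1)"
      then obtain g where g: "g \<in> carrier G" "u = compose (carrier G) (compose (carrier G) f2 f1) (innm g)"
        using outer_class_eq[OF f21] by auto
      have a1: "compose (carrier G) f1 (innm g) \<in> auto G" by (rule compose_auto[OF f1 innm_auto[OF g(1)]])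
      have a2: "compose (carrier G) f2 (innm \<one>\<^bsub>G\<^esub>) \<in> auto G" by (rule compose_auto[OF f2 innm_auto]) simp
      have "u = compose (carrier G) f1 (innm g) \<otimes>\<^bsub>AutL G\<^esub> compose (carrier G) f2 (innm \<one>\<^bsub>G\<^esub>)"
        unfolding autL_mult[OF a1 a2] g(2)
      proof (rule compose_ext)
        fix x assume x: "x \<in> carrier G"
        have "innm g x \<in> carrier G" using x g by (simp add: innm_def)
        hence "f1 (innm g x) \<in> carrier G" using auto_carr[OF f1] by blast
        thus "compose (carrier G) f2 f1 (innm g x) = compose (carrier G) f2 (innm \<one>\<^bsub>G\<^esub>) (compose (carrier G) f1 (innm g) x)"
          using x g by (simp add: compose_def innm_def)
      qed
      moreover have "compose (carrier G) f1 (innm g) \<in> outer_class G f1" using outer_class_eq[OF f1] g by blast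
      moreover have "compose (carrier G) f2 (innm \<one>\<^bsub>G\<^esub>) \<in> outer_class G f2" using outer_class_eq[OF f2] by force
      ultimately show "u \<in> outer_class G f1 <#>\<^bsub>AutL G\<^esub> outer_class G f2" unfolding set_mult_def by blast
    qed
  qed
qed

end



lemma (in group) conj_lemma:
  assumes c: "B \<in> carrier G" "B' \<in> carrier G" "d \<in> carrier G" "x \<in> carrier G"
    and eq: "inv B' \<otimes> x \<otimes> B' = inv d \<otimes> (inv B \<otimes> x \<otimes> B) \<otimes> d"
  shows "(B \<otimes> d \<otimes> inv B') \<otimes> x = x \<otimes> (B \<otimes> d \<otimes> inv B')"
proof -
  have "B \<otimes> d \<otimes> (inv B' \<otimes> x \<otimes> B') \<otimes> inv B' = B \<otimes> d \<otimes> (inv d \<otimes> (inv B \<otimes> x \<otimes> B) \<otimes> d) \<otimes> inv B'"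
    by (simp only: eq)
  thus ?thesis using c by (simp add: m_assoc)
qed

lemma (in group) t_lemma:
  assumes c: "A \<in> carrier G" "A' \<in> carrier G" "D \<in> carrier G" "T \<in> carrier G"
    and eq: "A' \<otimes> T = inv D \<otimes> (A \<otimes> T) \<otimes> D"
  shows "T \<otimes> D \<otimes> inv T = inv A \<otimes> D \<otimes> A'"
proof -
  have "inv A \<otimes> (D \<otimes> (A' \<otimes> T)) \<otimes> inv T = inv A \<otimes> (D \<otimes> (inv D \<otimes> (A \<otimes> T) \<otimes> D)) \<otimes> inv T"
    by (simp only: eq)
  thus ?thesis using c by (simp add: m_assoc)
qed

context hnn begin

abbreviation "ZK \<equiv> center H <#> K"

lemma center_carr: "z \<in> center H \<Longrightarrow> z \<in> carrier H"
  by (simp add: center_def centralizer_def)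

lemma ZK_mem: "x \<in> ZK \<longleftrightarrow> (\<exists>z\<in>center H. \<exists>k\<in>K. x = z \<otimes> k)"
  by (auto simp: set_mult_def)

lemma ZK_I: "z \<in> center H \<Longrightarrow> k \<in> K \<Longrightarrow> z \<otimes> k \<in> ZK"
  unfolding set_mult_def by blast

lemma center_mult: "z \<in> center H \<Longrightarrow> z' \<in> center H \<Longrightarrow> z \<otimes> z' \<in> center H"
  using centr_mult[of z "carrier H" z'] by (simp add: center_def)
lemma center_inv: "z \<in> center H \<Longrightarrow> inv z \<in> center H"
  using centr_inv[of z "carrier H"] by (simp add: center_def)

lemma ZK_sub: "subgroup ZK H"
proof (rule subgroupI)
  show "ZK \<subseteq> carrier H"
  proof
    fix x assume "x \<in> ZK"
    then obtain z k where zk: "z \<in> center H" "k \<in> K" "x = z \<otimes> k" unfolding ZK_mem by blast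
    have "z \<in> carrier H" "k \<in> carrier H" using center_carr[OF zk(1)] subsetD[OF Kc zk(2)] by auto
    thus "x \<in> carrier H" using zk(3) by simp
  qed
  have "\<one> \<in> center H" by (auto simp: center_def centralizer_def)
  hence "\<one> \<otimes> \<one> \<in> ZK" using ZK_I subgroup.one_closed[OF K_sub] by blast
  thus "ZK \<noteq> {}" by blast
next
  fix x assume "x \<in> ZK"
  then obtain z k where zk: "z \<in> center H" "k \<in> K" "x = z \<otimes> k" unfolding ZK_mem by blast
  have zc: "z \<in> carrier H" and kc: "k \<in> carrier H" using center_carr[OF zk(1)] subsetD[OF Kc zk(2)] by auto
  have ic: "inv z \<otimes> inv k = inv k \<otimes> inv z" using center_comm[OF center_inv[OF zk(1)], of "inv k"] kc by simp
  have "inv x = inv z \<otimes> inv k" using ic zk(3) zc kc by (simp add: inv_mult_group)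
  moreover have "inv k \<in> K" using zk(2) subgroup.m_inv_closed[OF K_sub] by blast
  ultimately show "inv x \<in> ZK" using ZK_I[OF center_inv[OF zk(1)]] by simp
next
  fix x y assume "x \<in> ZK" "y \<in> ZK"
  then obtain z k z' k' where zk: "z \<in> center H" "k \<in> K" "x = z \<otimes> k" "z' \<in> center H" "k' \<in> K" "y = z' \<otimes> k'"
    unfolding ZK_mem by blast
  have c: "z \<in> carrier H" "k \<in> carrier H" "z' \<in> carrier H" "k' \<in> carrier H"
    using center_carr[OF zk(1)] subsetD[OF Kc zk(2)] center_carr[OF zk(4)] subsetD[OF Kc zk(5)] by auto
  have cm: "z' \<otimes> k = k \<otimes> z'" using center_comm[OF zk(4) c(2)] .
  have "x \<otimes> y = z \<otimes> ((k \<otimes> z') \<otimes> k')" using zk(3,6) c by (simp add: m_assoc)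
  also have "\<dots> = z \<otimes> ((z' \<otimes> k) \<otimes> k')" using cm by simp
  also have "\<dots> = (z \<otimes> z') \<otimes> (k \<otimes> k')" using c by (simp add: m_assoc)
  finally have eq: "x \<otimes> y = (z \<otimes> z') \<otimes> (k \<otimes> k')" .
  have "k \<otimes> k' \<in> K" using subgroup.m_closed[OF K_sub zk(2,5)] .
  thus "x \<otimes> y \<in> ZK" using ZK_I[OF center_mult[OF zk(1,4)]] eq by simp
qed

lemma inc_G: "inc \<in> hom H G" by (rule inc_hom)

lemma WD:
  assumes c: "cond b a" and c': "cond b' a'"
    and eq: "outer_class G (alpha b a) = outer_class G (alpha b' a')"
  shows "ZK #> b = ZK #> b'"
proof -
  interpret Gg: group G by (rule group_G)
  note S = spec_alpha[OF c] and S' = spec_alpha[OF c']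
  have au: "alpha b a \<in> auto G" and au': "alpha b' a' \<in> auto G" using S S' by (auto simp: spec_def)
  have bN: "b \<in> normalizer H K" and a: "a \<in> carrier H" using c by (auto simp: cond_def)
  have b'N: "b' \<in> normalizer H K" and a': "a' \<in> carrier H" using c' by (auto simp: cond_def)
  have b: "b \<in> carrier H" and b': "b' \<in> carrier H" using bN b'N norm_carr by auto
  have "alpha b' a' \<in> outer_class G (alpha b a)" using OC_self[OF au'] eq by simp
  then obtain g where g: "g \<in> carrier G" "alpha b' a' = compose (carrier G) (alpha b a) (innm g)"
    using outer_class_eq[OF au] by auto
  define d where "d = alpha b a g"
  have dc: "d \<in> carrier G" using auto_carr[OF au g(1)] by (simp add: d_def)
  have act: "alpha b' a' x = inv\<^bsub>G\<^esub> d \<otimes>\<^bsub>G\<^esub> alpha b a x \<otimes>\<^bsub>G\<^esub> d" if "x \<in> carrier G" for x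
    using compose_innm[OF au g(1) that] g(2) by (simp add: d_def)
  define u where "u = inc b \<otimes>\<^bsub>G\<^esub> d \<otimes>\<^bsub>G\<^esub> inv\<^bsub>G\<^esub> (inc b')"
  have uc: "u \<in> carrier G" using b b' dc inc_carr by (simp add: u_def)
  have ucomm: "u \<otimes>\<^bsub>G\<^esub> inc h = inc h \<otimes>\<^bsub>G\<^esub> u" if h: "h \<in> carrier H" for h
  proof -
    have "inc (conjH H b' h) = inv\<^bsub>G\<^esub> d \<otimes>\<^bsub>G\<^esub> inc (conjH H b h) \<otimes>\<^bsub>G\<^esub> d"
      using act[OF inc_carr[OF h]] S S' h by (simp add: spec_def)
    moreover have "inc (conjH H b' h) = inv\<^bsub>G\<^esub> (inc b') \<otimes>\<^bsub>G\<^esub> inc h \<otimes>\<^bsub>G\<^esub> inc b'"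
      using h b' by (simp add: conjH_def inc_mult[symmetric] inc_inv)
    moreover have "inc (conjH H b h) = inv\<^bsub>G\<^esub> (inc b) \<otimes>\<^bsub>G\<^esub> inc h \<otimes>\<^bsub>G\<^esub> inc b"
      using h b by (simp add: conjH_def inc_mult[symmetric] inc_inv)
    ultimately show ?thesis unfolding u_def
      by (intro Gg.conj_lemma) (use h b b' dc inc_carr in auto)
  qed
  obtain z0 where z0: "z0 \<in> carrier H" "u = inc z0" using centralizer_H[OF uc ucomm] by auto
  have z0Z: "z0 \<in> center H"
    unfolding center_def centralizer_def
  proof (intro CollectI conjI ballI)
    show "z0 \<in> carrier H" by (rule z0(1))
    fix h assume h: "h \<in> carrier H"
    have "inc (z0 \<otimes> h) = inc (h \<otimes> z0)" using ucomm[OF h] z0 h by (simp add: inc_mult)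
    thus "z0 \<otimes> h = h \<otimes> z0" using inc_inj z0 h by simp
  qed
  define d0 where "d0 = inv b \<otimes> z0 \<otimes> b'"
  have d0c: "d0 \<in> carrier H" using b b' z0 by (simp add: d0_def)
  have dd0: "d = inc d0"
  proof -
    have "d = inv\<^bsub>G\<^esub> (inc b) \<otimes>\<^bsub>G\<^esub> u \<otimes>\<^bsub>G\<^esub> inc b'" using dc b b' inc_carr by (simp add: u_def Gg.m_assoc)
    thus ?thesis using z0 b b' by (simp add: inc_inv inc_mult d0_def)
  qed
  have "inc a' \<otimes>\<^bsub>G\<^esub> tt = inv\<^bsub>G\<^esub> d \<otimes>\<^bsub>G\<^esub> (inc a \<otimes>\<^bsub>G\<^esub> tt) \<otimes>\<^bsub>G\<^esub> d"
    using act[OF tt_carr] S S' by (simp add: spec_def)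
  hence "tt \<otimes>\<^bsub>G\<^esub> d \<otimes>\<^bsub>G\<^esub> inv\<^bsub>G\<^esub> tt = inv\<^bsub>G\<^esub> (inc a) \<otimes>\<^bsub>G\<^esub> d \<otimes>\<^bsub>G\<^esub> inc a'"
    by (intro Gg.t_lemma) (use a a' dc inc_carr tt_carr in auto)
  hence tq: "tt \<otimes>\<^bsub>G\<^esub> inc d0 \<otimes>\<^bsub>G\<^esub> inv\<^bsub>G\<^esub> tt = inc (inv a \<otimes> d0 \<otimes> a')"
    using dd0 a a' d0c by (simp add: inc_inv inc_mult)
  have ad: "inv a \<otimes> d0 \<otimes> a' \<in> carrier H" using a a' d0c by simp
  have d0K: "d0 \<in> K" by (rule britton_t[OF d0c ad tq])
  have zc: "z0 \<in> carrier H" by (rule z0(1))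
  have "b' = inv z0 \<otimes> (b \<otimes> d0 \<otimes> inv b) \<otimes> b" using b b' zc by (simp add: d0_def m_assoc)
  moreover have "inv z0 \<otimes> (b \<otimes> d0 \<otimes> inv b) \<in> ZK"
    by (rule ZK_I[OF center_inv[OF z0Z] norm_conj(1)[OF bN d0K]])
  ultimately have "b' \<in> ZK #> b" unfolding r_coset_def by blast
  thus ?thesis using repr_independence[OF _ b ZK_sub] by blast
qed

end



context hnn begin

lemma phi_center: assumes z: "z \<in> center H" shows "\<phi> z \<in> center H"
  unfolding center_def centralizer_def
proof (intro CollectI conjI ballI)
  have zc: "z \<in> carrier H" by (rule center_carr[OF z])
  show "\<phi> z \<in> carrier H" using phi_closed[OF zc] .
  fix h assume h: "h \<in> carrier H"
  obtain h' where h': "h' \<in> carrier H" "h = \<phi> h'" using phi_bij h by (metis bij_betw_iff_bijections)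
  have "\<phi> z \<otimes> \<phi> h' = \<phi> (z \<otimes> h')" using zc h' by (simp add: phi_mult)
  also have "\<dots> = \<phi> (h' \<otimes> z)" using center_comm[OF z h'(1)] by simp
  also have "\<dots> = \<phi> h' \<otimes> \<phi> z" using zc h' by (simp add: phi_mult)
  finally show "\<phi> z \<otimes> h = h \<otimes> \<phi> z" using h' by simp
qed

lemma conj_centr: assumes c: "c \<in> centralizer H (\<phi> ` K)" and bN: "b \<in> normalizer H K"
  shows "\<phi> b \<otimes> c \<otimes> inv (\<phi> b) \<in> centralizer H (\<phi> ` K)"
  unfolding centralizer_def
proof (intro CollectI conjI ballI)
  have b: "b \<in> carrier H" by (rule norm_carr[OF bN])
  have cc: "c \<in> carrier H" by (rule centr_carr[OF c])
  define P where "P = \<phi> b"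
  have Pc: "P \<in> carrier H" using phi_closed[OF b] by (simp add: P_def)
  show "\<phi> b \<otimes> c \<otimes> inv (\<phi> b) \<in> carrier H" using Pc cc by (simp add: P_def[symmetric])
  fix s assume "s \<in> \<phi> ` K"
  then obtain k where k: "k \<in> K" "s = \<phi> k" by auto
  have kc: "k \<in> carrier H" using k Kc by blast
  define k' where "k' = inv b \<otimes> k \<otimes> b"
  have k'K: "k' \<in> K" using norm_conj(2)[OF bN k(1)] by (simp add: k'_def)
  have k'c: "k' \<in> carrier H" using k'K Kc by blast
  have pk': "\<phi> k' = inv P \<otimes> \<phi> k \<otimes> P" using b kc by (simp add: k'_def phi_mult phi_inv P_def)
  have pkc: "\<phi> k \<in> carrier H" using phi_closed[OF kc] .
  have pk'c: "\<phi> k' \<in> carrier H" using phi_closed[OF k'c] .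
  have pk: "\<phi> k = P \<otimes> \<phi> k' \<otimes> inv P" using pk' Pc pkc by (simp add: m_assoc)
  have comm: "c \<otimes> \<phi> k' = \<phi> k' \<otimes> c" using centrD[OF c] k'K by simp
  have comm2: "c \<otimes> (\<phi> k' \<otimes> y) = \<phi> k' \<otimes> (c \<otimes> y)" if "y \<in> carrier H" for y
    using comm that cc pk'c by (simp add: m_assoc[symmetric])
  have "P \<otimes> c \<otimes> inv P \<otimes> (P \<otimes> \<phi> k' \<otimes> inv P) = P \<otimes> (c \<otimes> (\<phi> k' \<otimes> inv P))"
    using Pc cc pk'c by (simp add: m_assoc)
  also have "\<dots> = P \<otimes> (\<phi> k' \<otimes> (c \<otimes> inv P))" using comm2 Pc by simp
  also have "\<dots> = (P \<otimes> \<phi> k' \<otimes> inv P) \<otimes> (P \<otimes> c \<otimes> inv P)" using Pc cc pk'c by (simp add: m_assoc)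
  finally show "\<phi> b \<otimes> c \<otimes> inv (\<phi> b) \<otimes> s = s \<otimes> (\<phi> b \<otimes> c \<otimes> inv (\<phi> b))"
    using k pk by (simp add: P_def)
qed

lemma cond_comp: assumes c1: "cond b1 a1" and c2: "cond b2 a2"
  shows "cond (b1 \<otimes> b2) (conjH H b2 a1 \<otimes> a2)"
proof -
  have b1N: "b1 \<in> normalizer H K" and a1: "a1 \<in> carrier H" and C1: "b1 \<otimes> a1 \<otimes> inv (\<phi> b1) \<in> centralizer H (\<phi> ` K)"
    using c1 by (auto simp: cond_def)
  have b2N: "b2 \<in> normalizer H K" and a2: "a2 \<in> carrier H" and C2: "b2 \<otimes> a2 \<otimes> inv (\<phi> b2) \<in> centralizer H (\<phi> ` K)"
    using c2 by (auto simp: cond_def)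
  have b1: "b1 \<in> carrier H" and b2: "b2 \<in> carrier H" using b1N b2N norm_carr by auto
  have p1: "\<phi> b1 \<in> carrier H" and p2: "\<phi> b2 \<in> carrier H" using b1 b2 phi_closed by auto
  have N: "b1 \<otimes> b2 \<in> normalizer H K" using subgroup.m_closed[OF norm_sub b1N b2N] .
  have eq: "(b1 \<otimes> b2) \<otimes> (conjH H b2 a1 \<otimes> a2) \<otimes> inv (\<phi> (b1 \<otimes> b2))
      = (b1 \<otimes> a1 \<otimes> inv (\<phi> b1)) \<otimes> (\<phi> b1 \<otimes> (b2 \<otimes> a2 \<otimes> inv (\<phi> b2)) \<otimes> inv (\<phi> b1))"
    using b1 b2 a1 a2 p1 p2 by (simp add: conjH_def phi_mult m_assoc inv_mult_group)
  have "(b1 \<otimes> a1 \<otimes> inv (\<phi> b1)) \<otimes> (\<phi> b1 \<otimes> (b2 \<otimes> a2 \<otimes> inv (\<phi> b2)) \<otimes> inv (\<phi> b1)) \<in> centralizer H (\<phi> ` K)"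
    by (rule centr_mult[OF C1 conj_centr[OF C2 b1N] phiK_carr])
  hence "(b1 \<otimes> b2) \<otimes> (conjH H b2 a1 \<otimes> a2) \<otimes> inv (\<phi> (b1 \<otimes> b2)) \<in> centralizer H (\<phi> ` K)"
    using eq by simp
  moreover have "conjH H b2 a1 \<otimes> a2 \<in> carrier H" using a1 a2 b2 by (simp add: conjH_def)
  ultimately show ?thesis using N by (simp add: cond_def)
qed

lemma alpha_comp: assumes c1: "cond b1 a1" and c2: "cond b2 a2"
  shows "compose (carrier G) (alpha b2 a2) (alpha b1 a1) = alpha (b1 \<otimes> b2) (conjH H b2 a1 \<otimes> a2)"
proof (rule spec_unique)
  interpret Gg: group G by (rule group_G)
  show "spec (conjH H (b1 \<otimes> b2)) (conjH H b2 a1 \<otimes> a2) (alpha (b1 \<otimes> b2) (conjH H b2 a1 \<otimes> a2))"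
    by (rule spec_alpha[OF cond_comp[OF c1 c2]])
  note S1 = spec_alpha[OF c1] and S2 = spec_alpha[OF c2]
  have au1: "alpha b1 a1 \<in> auto G" and au2: "alpha b2 a2 \<in> auto G" using S1 S2 by (auto simp: spec_def)
  have b1: "b1 \<in> carrier H" and b2: "b2 \<in> carrier H" using c1 c2 norm_carr by (auto simp: cond_def)
  have a1: "a1 \<in> carrier H" and a2: "a2 \<in> carrier H" using c1 c2 by (auto simp: cond_def)
  show "spec (conjH H (b1 \<otimes> b2)) (conjH H b2 a1 \<otimes> a2) (compose (carrier G) (alpha b2 a2) (alpha b1 a1))"
    unfolding spec_def
  proof (intro conjI ballI)
    show "compose (carrier G) (alpha b2 a2) (alpha b1 a1) \<in> auto G" by (rule compose_auto[OF au2 au1])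
    fix h assume h: "h \<in> carrier H"
    have "compose (carrier G) (alpha b2 a2) (alpha b1 a1) (inc h) = inc (conjH H b2 (conjH H b1 h))"
      using S1 S2 h inc_carr conjH_carr b1 by (simp add: spec_def compose_def)
    also have "conjH H b2 (conjH H b1 h) = conjH H (b1 \<otimes> b2) h"
      using b1 b2 h by (simp add: conjH_def m_assoc inv_mult_group)
    finally show "compose (carrier G) (alpha b2 a2) (alpha b1 a1) (inc h) = inc (conjH H (b1 \<otimes> b2) h)" .
  next
    have "compose (carrier G) (alpha b2 a2) (alpha b1 a1) tt = alpha b2 a2 (inc a1 \<otimes>\<^bsub>G\<^esub> tt)"
      using S1 tt_carr by (simp add: spec_def compose_def)
    also have "\<dots> = inc (conjH H b2 a1) \<otimes>\<^bsub>G\<^esub> (inc a2 \<otimes>\<^bsub>G\<^esub> tt)"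
      using S2 a1 inc_carr tt_carr auto_hom[OF au2] by (simp add: spec_def hom_mult)
    also have "\<dots> = inc (conjH H b2 a1 \<otimes> a2) \<otimes>\<^bsub>G\<^esub> tt"
      using a1 a2 b2 conjH_carr inc_carr tt_carr by (simp add: Gg.m_assoc[symmetric] inc_mult)
    finally show "compose (carrier G) (alpha b2 a2) (alpha b1 a1) tt = inc (conjH H b2 a1 \<otimes> a2) \<otimes>\<^bsub>G\<^esub> tt" .
  qed
qed

lemma alpha_one: "hnn_alpha H K \<phi> (conjH H \<one>) a = hnn_alpha H K \<phi> (\<lambda>h. h) a"
  unfolding hnn_alpha_def by (simp add: conjH_def)

lemma one_N: "\<one> \<in> normalizer H K" using subgroup.one_closed[OF norm_sub] .

lemma cond_one: "a \<in> centralizer H (\<phi> ` K) \<Longrightarrow> cond \<one> a"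
  using one_N centr_carr[of a] by (simp add: cond_def phi_one)

lemma KER: assumes c: "cond b a" and bZ: "b \<in> ZK"
  shows "\<exists>a''. a'' \<in> centralizer H (\<phi> ` K) \<and> outer_class G (alpha b a) = outer_class G (hnn_alpha H K \<phi> (\<lambda>h. h) a'')"
proof -
  interpret Gg: group G by (rule group_G)
  obtain z k where zk: "z \<in> center H" "k \<in> K" "b = z \<otimes> k" using bZ unfolding ZK_mem by blast
  have zc: "z \<in> carrier H" and kc: "k \<in> carrier H" using center_carr[OF zk(1)] subsetD[OF Kc zk(2)] by auto
  have a: "a \<in> carrier H" and C: "b \<otimes> a \<otimes> inv (\<phi> b) \<in> centralizer H (\<phi> ` K)" using c by (auto simp: cond_def)
  have pz: "\<phi> z \<in> carrier H" and pk: "\<phi> k \<in> carrier H" using zc kc phi_closed by auto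
  define a'' where "a'' = k \<otimes> a \<otimes> inv (\<phi> k)"
  have a''c: "a'' \<in> carrier H" using kc a pk by (simp add: a''_def)
  have eqa: "a'' = inv z \<otimes> (b \<otimes> a \<otimes> inv (\<phi> b)) \<otimes> \<phi> z"
    using zk(3) zc kc a pz pk by (simp add: a''_def phi_mult m_assoc inv_mult_group)
  have a''C: "a'' \<in> centralizer H (\<phi> ` K)"
    unfolding eqa
    by (rule centr_mult[OF centr_mult[OF center_centr[OF center_inv[OF zk(1)] phiK_carr] C phiK_carr]
          center_centr[OF phi_center[OF zk(1)] phiK_carr] phiK_carr])
  have c1: "cond \<one> a''" by (rule cond_one[OF a''C])
  note S'' = spec_alpha[OF c1] and S = spec_alpha[OF c]
  have au'': "alpha \<one> a'' \<in> auto G" using S'' by (simp add: spec_def)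
  have ikc: "inc k \<in> carrier G" using inc_carr[OF kc] .
  have F: "compose (carrier G) (alpha \<one> a'') (innm (inc k)) = alpha b a"
  proof (rule spec_unique[OF _ S])
    show "spec (conjH H b) a (compose (carrier G) (alpha \<one> a'') (innm (inc k)))"
      unfolding spec_def
    proof (intro conjI ballI)
      show "compose (carrier G) (alpha \<one> a'') (innm (inc k)) \<in> auto G"
        by (rule compose_auto[OF au'' innm_auto[OF ikc]])
      have ak: "alpha \<one> a'' (inc k) = inc k" using S'' kc by (simp add: spec_def conjH_def)
      fix h assume h: "h \<in> carrier H"
      have ah: "alpha \<one> a'' (inc h) = inc h" using S'' h by (simp add: spec_def conjH_def)
      have "conjH H b h = inv k \<otimes> h \<otimes> k"
      proof -
        have "h \<otimes> z = z \<otimes> h" using center_comm[OF zk(1) h] by simp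
        hence "inv z \<otimes> (h \<otimes> (z \<otimes> k)) = h \<otimes> k" using zc h kc by (simp add: m_assoc[symmetric])
        thus ?thesis using zk(3) zc kc h by (simp add: conjH_def inv_mult_group m_assoc)
      qed
      thus "compose (carrier G) (alpha \<one> a'') (innm (inc k)) (inc h) = inc (conjH H b h)"
        using compose_innm[OF au'' ikc inc_carr[OF h]] ak ah h kc
        by (simp add: inc_inv inc_mult)
    next
      have ak: "alpha \<one> a'' (inc k) = inc k" using S'' kc by (simp add: spec_def conjH_def)
      have at: "alpha \<one> a'' tt = inc a'' \<otimes>\<^bsub>G\<^esub> tt" using S'' by (simp add: spec_def)
      have tk: "tt \<otimes>\<^bsub>G\<^esub> inc k = inc (\<phi> k) \<otimes>\<^bsub>G\<^esub> tt"
      proof -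
        have "tt \<otimes>\<^bsub>G\<^esub> inc k \<otimes>\<^bsub>G\<^esub> inv\<^bsub>G\<^esub> tt \<otimes>\<^bsub>G\<^esub> tt = inc (\<phi> k) \<otimes>\<^bsub>G\<^esub> tt" using rel_G[OF zk(2)] by simp
        thus ?thesis using tt_carr ikc by (simp add: Gg.m_assoc)
      qed
      have "compose (carrier G) (alpha \<one> a'') (innm (inc k)) tt = inv\<^bsub>G\<^esub> (inc k) \<otimes>\<^bsub>G\<^esub> (inc a'' \<otimes>\<^bsub>G\<^esub> tt) \<otimes>\<^bsub>G\<^esub> inc k"
        using compose_innm[OF au'' ikc tt_carr] ak at by simp
      also have "\<dots> = inv\<^bsub>G\<^esub> (inc k) \<otimes>\<^bsub>G\<^esub> inc a'' \<otimes>\<^bsub>G\<^esub> (tt \<otimes>\<^bsub>G\<^esub> inc k)"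
        using ikc inc_carr[OF a''c] tt_carr by (simp add: Gg.m_assoc)
      also have "\<dots> = inc (inv k \<otimes> a'' \<otimes> \<phi> k) \<otimes>\<^bsub>G\<^esub> tt"
        using tk kc a''c pk inc_carr tt_carr by (simp add: Gg.m_assoc[symmetric] inc_inv inc_mult)
      also have "inv k \<otimes> a'' \<otimes> \<phi> k = a" using kc a pk by (simp add: a''_def m_assoc)
      finally show "compose (carrier G) (alpha \<one> a'') (innm (inc k)) tt = inc a \<otimes>\<^bsub>G\<^esub> tt" .
    qed
  qed
  have "outer_class G (alpha b a) = outer_class G (alpha \<one> a'')"
    using OC_inner[OF au'' ikc] F by simp
  thus ?thesis using a''C by (auto simp: alpha_def alpha_one)
qed

lemma coset_prod: assumes b1: "b1 \<in> normalizer H K" and b2: "b2 \<in> normalizer H K"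
  shows "(ZK #> b1) <#> (ZK #> b2) = ZK #> (b1 \<otimes> b2)"
proof -
  have b1c: "b1 \<in> carrier H" and b2c: "b2 \<in> carrier H" using b1 b2 norm_carr by auto
  have ZKc: "ZK \<subseteq> carrier H" using ZK_sub subgroup.subset by blast
  have conjZK: "b1 \<otimes> x \<otimes> inv b1 \<in> ZK" if x: "x \<in> ZK" for x
  proof -
    obtain z k where zk: "z \<in> center H" "k \<in> K" "x = z \<otimes> k" using x unfolding ZK_mem by blast
    have zc: "z \<in> carrier H" and kc: "k \<in> carrier H" using center_carr[OF zk(1)] subsetD[OF Kc zk(2)] by auto
    have "b1 \<otimes> z = z \<otimes> b1" using center_comm[OF zk(1) b1c] by simp
    hence "b1 \<otimes> x \<otimes> inv b1 = z \<otimes> (b1 \<otimes> k \<otimes> inv b1)"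
      using zk(3) zc kc b1c by (simp add: m_assoc[symmetric])
    thus ?thesis using ZK_I[OF zk(1) norm_conj(1)[OF b1 zk(2)]] by simp
  qed
  show ?thesis
  proof
    show "(ZK #> b1) <#> (ZK #> b2) \<subseteq> ZK #> (b1 \<otimes> b2)"
    proof
      fix y assume "y \<in> (ZK #> b1) <#> (ZK #> b2)"
      then obtain x1 x2 where x: "x1 \<in> ZK" "x2 \<in> ZK" "y = (x1 \<otimes> b1) \<otimes> (x2 \<otimes> b2)"
        unfolding set_mult_def r_coset_def by blast
      have c: "x1 \<in> carrier H" "x2 \<in> carrier H" using x ZKc by auto
      have "y = (x1 \<otimes> (b1 \<otimes> x2 \<otimes> inv b1)) \<otimes> (b1 \<otimes> b2)" using x(3) c b1c b2c by (simp add: m_assoc)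
      moreover have "x1 \<otimes> (b1 \<otimes> x2 \<otimes> inv b1) \<in> ZK" using subgroup.m_closed[OF ZK_sub x(1) conjZK[OF x(2)]] .
      ultimately show "y \<in> ZK #> (b1 \<otimes> b2)" unfolding r_coset_def by blast
    qed
  next
    show "ZK #> (b1 \<otimes> b2) \<subseteq> (ZK #> b1) <#> (ZK #> b2)"
    proof
      fix y assume "y \<in> ZK #> (b1 \<otimes> b2)"
      then obtain x where x: "x \<in> ZK" "y = x \<otimes> (b1 \<otimes> b2)" unfolding r_coset_def by blast
      have xc: "x \<in> carrier H" using x ZKc by auto
      have "y = (x \<otimes> b1) \<otimes> (\<one> \<otimes> b2)" using x(2) xc b1c b2c by (simp add: m_assoc)
      moreover have "\<one> \<in> ZK" using subgroup.one_closed[OF ZK_sub] .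
      ultimately show "y \<in> (ZK #> b1) <#> (ZK #> b2)" using x(1) unfolding set_mult_def r_coset_def by blast
    qed
  qed
qed

end



context hnn begin

definition "chi A = (SOME C. \<exists>b a. cond b a \<and> A = outer_class G (alpha b a) \<and> C = ZK #> b)"

lemma chi_val: assumes c: "cond b a" shows "chi (outer_class G (alpha b a)) = ZK #> b"
proof -
  have "\<exists>b' a'. cond b' a' \<and> outer_class G (alpha b a) = outer_class G (alpha b' a') \<and> chi (outer_class G (alpha b a)) = ZK #> b'"
    unfolding chi_def by (rule someI_ex) (use c in blast)
  then obtain b' a' where "cond b' a'" "outer_class G (alpha b a) = outer_class G (alpha b' a')"
    "chi (outer_class G (alpha b a)) = ZK #> b'" by blast
  thus ?thesis using WD[OF c] by simp
qed

lemma OutV_eq: "OutV H K \<phi> = {outer_class G (alpha b a) | b a. cond b a}"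
  by (simp add: OutV_def cond_def alpha_def)

lemma carrier_Q: "carrier ((H\<lparr>carrier := normalizer H K\<rparr>) Mod ZK) = {ZK #> b | b. b \<in> normalizer H K}"
  by (auto simp: FactGroup_def RCOSETS_def r_coset_def)

lemma mult_S: "monoid.mult ((OutL G)\<lparr>carrier := OutV H K \<phi>\<rparr>) = set_mult (AutL G)"
  by (simp add: OutL_def FactGroup_def)

lemma mult_Q: "monoid.mult ((H\<lparr>carrier := normalizer H K\<rparr>) Mod ZK) = set_mult H"
  by (simp add: FactGroup_def set_mult_def fun_eq_iff)

lemma main:
  "\<exists>\<chi>. \<chi> \<in> hom ((OutL G)\<lparr>carrier := OutV H K \<phi>\<rparr>) ((H\<lparr>carrier := normalizer H K\<rparr>) Mod ZK)
      \<and> (\<forall>b a. b \<in> normalizer H K \<and> a \<in> carrier H \<and> b \<otimes> a \<otimes> inv (\<phi> b) \<in> centralizer H (\<phi> ` K) \<longrightarrow>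
               \<chi> (outer_class G (hnn_alpha H K \<phi> (conjH H b) a)) = ZK #> b)
      \<and> \<chi> ` OutV H K \<phi> = carrier ((H\<lparr>carrier := normalizer H K\<rparr>) Mod ZK)
      \<and> kernel ((OutL G)\<lparr>carrier := OutV H K \<phi>\<rparr>) ((H\<lparr>carrier := normalizer H K\<rparr>) Mod ZK) \<chi> = CK H K \<phi>"
proof (intro exI conjI allI impI)
  show "chi \<in> hom ((OutL G)\<lparr>carrier := OutV H K \<phi>\<rparr>) ((H\<lparr>carrier := normalizer H K\<rparr>) Mod ZK)"
  proof (rule homI)
    fix A assume "A \<in> carrier ((OutL G)\<lparr>carrier := OutV H K \<phi>\<rparr>)"
    then obtain b a where "cond b a" "A = outer_class G (alpha b a)" by (auto simp: OutV_eq)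
    thus "chi A \<in> carrier ((H\<lparr>carrier := normalizer H K\<rparr>) Mod ZK)"
      using chi_val carrier_Q by (auto simp: cond_def)
  next
    fix A B assume "A \<in> carrier ((OutL G)\<lparr>carrier := OutV H K \<phi>\<rparr>)" "B \<in> carrier ((OutL G)\<lparr>carrier := OutV H K \<phi>\<rparr>)"
    then obtain b1 a1 b2 a2 where c: "cond b1 a1" "A = outer_class G (alpha b1 a1)" "cond b2 a2" "B = outer_class G (alpha b2 a2)"
      by (auto simp: OutV_eq)
    have au1: "alpha b1 a1 \<in> auto G" and au2: "alpha b2 a2 \<in> auto G"
      using spec_alpha[OF c(1)] spec_alpha[OF c(3)] by (auto simp: spec_def)
    have "A \<otimes>\<^bsub>(OutL G)\<lparr>carrier := OutV H K \<phi>\<rparr>\<^esub> B = outer_class G (alpha (b1 \<otimes> b2) (conjH H b2 a1 \<otimes> a2))"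
      using c OC_mult[OF au1 au2] alpha_comp[OF c(1) c(3)] by (simp add: mult_S)
    hence "chi (A \<otimes>\<^bsub>(OutL G)\<lparr>carrier := OutV H K \<phi>\<rparr>\<^esub> B) = ZK #> (b1 \<otimes> b2)"
      using chi_val[OF cond_comp[OF c(1) c(3)]] by simp
    also have "\<dots> = (ZK #> b1) <#> (ZK #> b2)"
      using coset_prod c(1,3) by (simp add: cond_def)
    finally show "chi (A \<otimes>\<^bsub>(OutL G)\<lparr>carrier := OutV H K \<phi>\<rparr>\<^esub> B) = chi A \<otimes>\<^bsub>(H\<lparr>carrier := normalizer H K\<rparr>) Mod ZK\<^esub> chi B"
      using c chi_val by (simp add: mult_Q)
  qed
next
  fix b a assume "b \<in> normalizer H K \<and> a \<in> carrier H \<and> b \<otimes> a \<otimes> inv (\<phi> b) \<in> centralizer H (\<phi> ` K)"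
  hence "cond b a" by (simp add: cond_def)
  thus "chi (outer_class G (hnn_alpha H K \<phi> (conjH H b) a)) = ZK #> b" using chi_val by (simp add: alpha_def)
next
  show "chi ` OutV H K \<phi> = carrier ((H\<lparr>carrier := normalizer H K\<rparr>) Mod ZK)"
  proof
    show "chi ` OutV H K \<phi> \<subseteq> carrier ((H\<lparr>carrier := normalizer H K\<rparr>) Mod ZK)"
      using chi_val carrier_Q by (auto simp: OutV_eq cond_def)
  next
    show "carrier ((H\<lparr>carrier := normalizer H K\<rparr>) Mod ZK) \<subseteq> chi ` OutV H K \<phi>"
    proof
      fix C assume "C \<in> carrier ((H\<lparr>carrier := normalizer H K\<rparr>) Mod ZK)"
      then obtain b where b: "b \<in> normalizer H K" "C = ZK #> b" using carrier_Q by auto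
      have bc: "b \<in> carrier H" using norm_carr[OF b(1)] .
      have pb: "\<phi> b \<in> carrier H" using phi_closed[OF bc] .
      have "b \<otimes> (inv b \<otimes> \<phi> b) \<otimes> inv (\<phi> b) = \<one>" using bc pb by (simp add: m_assoc)
      moreover have "\<one> \<in> centralizer H (\<phi> ` K)" using phiK_carr by (auto simp: centralizer_def)
      ultimately have c: "cond b (inv b \<otimes> \<phi> b)" using b bc pb by (simp add: cond_def)
      hence "chi (outer_class G (alpha b (inv b \<otimes> \<phi> b))) = C" using chi_val b by simp
      moreover have "outer_class G (alpha b (inv b \<otimes> \<phi> b)) \<in> OutV H K \<phi>" using c by (auto simp: OutV_eq)
      ultimately show "C \<in> chi ` OutV H K \<phi>" by blast
    qed
  qed
next
  have ZKc: "ZK \<subseteq> carrier H" using ZK_sub subgroup.subset by blast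
  show "kernel ((OutL G)\<lparr>carrier := OutV H K \<phi>\<rparr>) ((H\<lparr>carrier := normalizer H K\<rparr>) Mod ZK) chi = CK H K \<phi>"
  proof
    show "kernel ((OutL G)\<lparr>carrier := OutV H K \<phi>\<rparr>) ((H\<lparr>carrier := normalizer H K\<rparr>) Mod ZK) chi \<subseteq> CK H K \<phi>"
    proof
      fix A assume "A \<in> kernel ((OutL G)\<lparr>carrier := OutV H K \<phi>\<rparr>) ((H\<lparr>carrier := normalizer H K\<rparr>) Mod ZK) chi"
      hence A: "A \<in> OutV H K \<phi>" "chi A = ZK" by (auto simp: kernel_def)
      then obtain b a where c: "cond b a" "A = outer_class G (alpha b a)" by (auto simp: OutV_eq)
      have bc: "b \<in> carrier H" using c norm_carr by (simp add: cond_def)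
      have "ZK #> b = ZK" using A c chi_val by simp
      moreover have "\<one> \<otimes> b \<in> ZK #> b" using subgroup.one_closed[OF ZK_sub] unfolding r_coset_def by blast
      ultimately have "b \<in> ZK" using bc by simp
      then obtain a'' where "a'' \<in> centralizer H (\<phi> ` K)" "A = outer_class G (hnn_alpha H K \<phi> (\<lambda>h. h) a'')"
        using KER[OF c(1)] c(2) by auto
      thus "A \<in> CK H K \<phi>" by (auto simp: CK_def)
    qed
  next
    show "CK H K \<phi> \<subseteq> kernel ((OutL G)\<lparr>carrier := OutV H K \<phi>\<rparr>) ((H\<lparr>carrier := normalizer H K\<rparr>) Mod ZK) chi"
    proof
      fix A assume "A \<in> CK H K \<phi>"
      then obtain a where a: "a \<in> centralizer H (\<phi> ` K)" "A = outer_class G (hnn_alpha H K \<phi> (\<lambda>h. h) a)"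
        by (auto simp: CK_def)
      have c: "cond \<one> a" by (rule cond_one[OF a(1)])
      have A: "A = outer_class G (alpha \<one> a)" using a(2) by (simp add: alpha_def alpha_one)
      have "chi A = ZK" using chi_val[OF c] A ZKc by simp
      moreover have "A \<in> OutV H K \<phi>" using A c by (auto simp: OutV_eq)
      ultimately show "A \<in> kernel ((OutL G)\<lparr>carrier := OutV H K \<phi>\<rparr>) ((H\<lparr>carrier := normalizer H K\<rparr>) Mod ZK) chi"
        by (simp add: kernel_def)
    qed
  qed
qed

end

theorem lemma4p4:
  fixes H :: "('a, 'm) monoid_scheme" and K :: "'a set" and \<phi> :: "'a \<Rightarrow> 'a"
  assumes "group H"
    and "subgroup K H" and "K \<noteq> carrier H"
    and "\<phi> \<in> hom H H" and "bij_betw \<phi> (carrier H) (carrier H)"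
  shows "\<exists>\<chi>. \<chi> \<in> hom ((OutL (HNN H K \<phi>))\<lparr>carrier := OutV H K \<phi>\<rparr>)
                  ((H\<lparr>carrier := normalizer H K\<rparr>) Mod (center H <#>\<^bsub>H\<^esub> K))
          \<and> (\<forall>b a. b \<in> normalizer H K \<and> a \<in> carrier H \<and>
                   b \<otimes>\<^bsub>H\<^esub> a \<otimes>\<^bsub>H\<^esub> inv\<^bsub>H\<^esub> (\<phi> b) \<in> centralizer H (\<phi> ` K) \<longrightarrow>
                   \<chi> (outer_class (HNN H K \<phi>) (hnn_alpha H K \<phi> (conjH H b) a))
                     = (center H <#>\<^bsub>H\<^esub> K) #>\<^bsub>H\<^esub> b)
          \<and> \<chi> ` OutV H K \<phi> = carrier ((H\<lparr>carrier := normalizer H K\<rparr>) Mod (center H <#>\<^bsub>H\<^esub> K))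
          \<and> kernel ((OutL (HNN H K \<phi>))\<lparr>carrier := OutV H K \<phi>\<rparr>)
                   ((H\<lparr>carrier := normalizer H K\<rparr>) Mod (center H <#>\<^bsub>H\<^esub> K)) \<chi>
              = CK H K \<phi>"
proof -
  interpret hnn H K \<phi> using assms by (simp add: hnn_def hnn_axioms_def)
  show ?thesis by (rule main)
qed


end
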